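(* If $G$ is a connected locally finite quasi-transitive graph with exactly $2$ ends, then there exists a periodic proper edge-coloring of $G$ with $\chi'(G)$ colors.
   Context: A graph is locally finite if every vertex has finite degree; quasi-transitive if $V(G)$ has finitely many orbits under $\mathrm{Aut}(G)$. Ends are equivalence classes of rays (infinite one-way paths), two rays being equivalent if there are infinitely many disjoint paths between them. $\chi'(G)$ is the chromatic index, the minimum number of colors in a proper edge-coloring (adjacent edges get distinct colors). An edge-coloring is periodic if the subgroup of automorphisms of $G$ mapping every edge to an edge of the same color has finitely many orbits on $V(G)$. *)

theory Defs
  imports Main
begin

definition graph :: "'a set \<Rightarrow> ('a \<Rightarrow> 'a \<Rightarrow> bool) \<Rightarrow> bool" where
  "graph V adj \<longleftrightarrow> (\<forall>u v. adj u v \<longrightarrow> u \<in> V \<and> v \<in> V \<and> u \<noteq> v \<and> adj v u)"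

definition edges :: "'a set \<Rightarrow> ('a \<Rightarrow> 'a \<Rightarrow> bool) \<Rightarrow> 'a set set" where
  "edges V adj = {{u, v} | u v. u \<in> V \<and> v \<in> V \<and> adj u v}"

definition locally_finite :: "'a set \<Rightarrow> ('a \<Rightarrow> 'a \<Rightarrow> bool) \<Rightarrow> bool" where
  "locally_finite V adj \<longleftrightarrow> (\<forall>v\<in>V. finite {u. adj v u})"

definition connected_graph :: "'a set \<Rightarrow> ('a \<Rightarrow> 'a \<Rightarrow> bool) \<Rightarrow> bool" where
  "connected_graph V adj \<longleftrightarrow> V \<noteq> {} \<and> (\<forall>u\<in>V. \<forall>v\<in>V. adj\<^sup>*\<^sup>* u v)"

definition automorphism :: "'a set \<Rightarrow> ('a \<Rightarrow> 'a \<Rightarrow> bool) \<Rightarrow> ('a \<Rightarrow> 'a) \<Rightarrow> bool" where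
  "automorphism V adj f \<longleftrightarrow> bij_betw f V V \<and> (\<forall>u\<in>V. \<forall>v\<in>V. adj u v \<longleftrightarrow> adj (f u) (f v))"

definition orbits :: "'a set \<Rightarrow> ('a \<Rightarrow> 'a) set \<Rightarrow> 'a set set" where
  "orbits V F = {{f v | f. f \<in> F} | v. v \<in> V}"

definition quasi_transitive :: "'a set \<Rightarrow> ('a \<Rightarrow> 'a \<Rightarrow> bool) \<Rightarrow> bool" where
  "quasi_transitive V adj \<longleftrightarrow> finite (orbits V {f. automorphism V adj f})"

definition ray :: "'a set \<Rightarrow> ('a \<Rightarrow> 'a \<Rightarrow> bool) \<Rightarrow> (nat \<Rightarrow> 'a) \<Rightarrow> bool" where
  "ray V adj r \<longleftrightarrow> inj r \<and> range r \<subseteq> V \<and> (\<forall>n. adj (r n) (r (Suc n)))"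

definition gpath :: "'a set \<Rightarrow> ('a \<Rightarrow> 'a \<Rightarrow> bool) \<Rightarrow> 'a list \<Rightarrow> bool" where
  "gpath V adj p \<longleftrightarrow> p \<noteq> [] \<and> distinct p \<and> set p \<subseteq> V \<and>
     (\<forall>i. Suc i < length p \<longrightarrow> adj (p ! i) (p ! Suc i))"

definition ray_equiv :: "'a set \<Rightarrow> ('a \<Rightarrow> 'a \<Rightarrow> bool) \<Rightarrow> (nat \<Rightarrow> 'a) \<Rightarrow> (nat \<Rightarrow> 'a) \<Rightarrow> bool" where
  "ray_equiv V adj r s \<longleftrightarrow> (\<exists>P. infinite P \<and>
     (\<forall>p\<in>P. gpath V adj p \<and> hd p \<in> range r \<and> last p \<in> range s) \<and>
     (\<forall>p\<in>P. \<forall>q\<in>P. p \<noteq> q \<longrightarrow> set p \<inter> set q = {}))"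

definition ends :: "'a set \<Rightarrow> ('a \<Rightarrow> 'a \<Rightarrow> bool) \<Rightarrow> (nat \<Rightarrow> 'a) set set" where
  "ends V adj = {{s. ray V adj s \<and> ray_equiv V adj r s} | r. ray V adj r}"

definition proper_edge_coloring :: "'a set \<Rightarrow> ('a \<Rightarrow> 'a \<Rightarrow> bool) \<Rightarrow> ('a set \<Rightarrow> nat) \<Rightarrow> bool" where
  "proper_edge_coloring V adj c \<longleftrightarrow>
     (\<forall>e\<in>edges V adj. \<forall>e'\<in>edges V adj. e \<noteq> e' \<and> e \<inter> e' \<noteq> {} \<longrightarrow> c e \<noteq> c e')"

definition chromatic_index :: "'a set \<Rightarrow> ('a \<Rightarrow> 'a \<Rightarrow> bool) \<Rightarrow> nat" where
  "chromatic_index V adj = (LEAST k. \<exists>c. proper_edge_coloring V adj c \<and> c ` edges V adj \<subseteq> {..<k})"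

definition periodic_coloring :: "'a set \<Rightarrow> ('a \<Rightarrow> 'a \<Rightarrow> bool) \<Rightarrow> ('a set \<Rightarrow> nat) \<Rightarrow> bool" where
  "periodic_coloring V adj c \<longleftrightarrow>
     finite (orbits V {f. automorphism V adj f \<and> (\<forall>e\<in>edges V adj. c (f ` e) = c e)})"

end

theory Submission imports Defs "HOL-Library.FuncSet" begin


locale G =
  fixes V :: "'a set" and adj :: "'a \<Rightarrow> 'a \<Rightarrow> bool"
  assumes gr: "graph V adj" and conn: "connected_graph V adj" and lf: "locally_finite V adj"
begin

lemma adj_V: "adj u v \<Longrightarrow> u \<in> V \<and> v \<in> V"
  using gr unfolding graph_def by blast
lemma adj_sym: "adj u v \<Longrightarrow> adj v u"
  using gr unfolding graph_def by blast
lemma adj_irr: "adj u v \<Longrightarrow> u \<noteq> v"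
  using gr unfolding graph_def by blast

lemma nbr_fin: "finite {v. adj u v}"
proof (cases "u \<in> V")
  case True then show ?thesis using lf unfolding locally_finite_def by blast
next
  case False then have "{v. adj u v} = {}" using adj_V by blast
  then show ?thesis by simp
qed

lemma conn_V: "u \<in> V \<Longrightarrow> v \<in> V \<Longrightarrow> adj\<^sup>*\<^sup>* u v"
  using conn unfolding connected_graph_def by blast

definition rad :: "'a set \<Rightarrow> 'a \<Rightarrow> 'a \<Rightarrow> bool" where
  "rad X u v \<longleftrightarrow> adj u v \<and> u \<in> X \<and> v \<in> X"
definition cc :: "'a set \<Rightarrow> 'a \<Rightarrow> 'a set" where
  "cc X x = {y. (rad X)\<^sup>*\<^sup>* x y}"

lemma rad_mono: assumes "X \<subseteq> Y" "(rad X)\<^sup>*\<^sup>* x y" shows "(rad Y)\<^sup>*\<^sup>* x y"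
  using assms(2) by (induction rule: rtranclp_induct) (use assms(1) in \<open>auto simp: rad_def intro: rtranclp.rtrancl_into_rtrancl\<close>)

lemma rad_sym: "(rad X)\<^sup>*\<^sup>* x y \<Longrightarrow> (rad X)\<^sup>*\<^sup>* y x"
proof (induction rule: rtranclp_induct)
  case base then show ?case by simp
next
  case (step y z)
  then have "rad X z y" using adj_sym unfolding rad_def by blast
  then show ?case using step(3) by (rule converse_rtranclp_into_rtranclp)
qed

lemma rad_in: "(rad X)\<^sup>*\<^sup>* x y \<Longrightarrow> x = y \<or> (x \<in> X \<and> y \<in> X)"
  by (induction rule: rtranclp_induct) (auto simp: rad_def)

lemma cc_self: "x \<in> cc X x"
  by (simp add: cc_def)

lemma cc_eq: "y \<in> cc X x \<Longrightarrow> cc X y = cc X x"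
  unfolding cc_def using rad_sym by (blast intro: rtranclp_trans)

lemma cc_sym: "y \<in> cc X x \<Longrightarrow> x \<in> cc X y"
  unfolding cc_def using rad_sym by blast

lemma cc_sub: "x \<in> X \<Longrightarrow> cc X x \<subseteq> X"
  unfolding cc_def using rad_in by blast

lemma cc_mono: "X \<subseteq> Y \<Longrightarrow> cc X x \<subseteq> cc Y x"
  unfolding cc_def using rad_mono by blast

lemma cc_step: "y \<in> cc X x \<Longrightarrow> rad X y z \<Longrightarrow> z \<in> cc X x"
  unfolding cc_def by (simp add: rtranclp.rtrancl_into_rtrancl)

lemma gpath_chain_rad:
  "p \<noteq> [] \<Longrightarrow> (\<forall>i. Suc i < length p \<longrightarrow> adj (p ! i) (p ! Suc i)) \<Longrightarrow> set p \<subseteq> X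
   \<Longrightarrow> (rad X)\<^sup>*\<^sup>* (hd p) (last p)"
proof (induction p)
  case Nil then show ?case by simp
next
  case (Cons a p)
  show ?case
  proof (cases "p = []")
    case True then show ?thesis by simp
  next
    case False
    have h1: "\<forall>i. Suc i < length p \<longrightarrow> adj (p ! i) (p ! Suc i)"
    proof (intro allI impI)
      fix i assume "Suc i < length p"
      then have "Suc (Suc i) < length (a # p)" by simp
      then show "adj (p ! i) (p ! Suc i)" using Cons.prems(2) by fastforce
    qed
    have "adj a (hd p)" using Cons.prems(2) False
      by (metis hd_conv_nth length_Cons length_greater_0_conv nth_Cons_0 nth_Cons_Suc Suc_less_eq)
    then have "rad X a (hd p)" using Cons.prems(3) False unfolding rad_def by auto
    moreover have "(rad X)\<^sup>*\<^sup>* (hd p) (last p)" using Cons.IH[OF False h1] Cons.prems(3) by auto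
    ultimately show ?thesis using False by (auto intro: converse_rtranclp_into_rtranclp)
  qed
qed

lemma gpath_rad: "gpath V adj p \<Longrightarrow> set p \<subseteq> X \<Longrightarrow> (rad X)\<^sup>*\<^sup>* (hd p) (last p)"
  unfolding gpath_def using gpath_chain_rad by blast

lemma walk_path:
  assumes "(rad X)\<^sup>*\<^sup>* x y" "x \<in> X" "X \<subseteq> V"
  shows "\<exists>p. gpath V adj p \<and> hd p = x \<and> last p = y \<and> set p \<subseteq> X"
  using assms
proof (induction rule: converse_rtranclp_induct)
  case base
  then show ?case by (intro exI[of _ "[y]"]) (auto simp: gpath_def)
next
  case (step x x')
  then have x'X: "x' \<in> X" and axx: "adj x x'" unfolding rad_def by auto
  obtain p where p: "gpath V adj p" "hd p = x'" "last p = y" "set p \<subseteq> X"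
    using step.IH x'X step.prems by blast
  show ?case
  proof (cases "x \<in> set p")
    case True
    then obtain k where k: "k < length p" "p ! k = x" by (meson in_set_conv_nth)
    define p' where "p' = drop k p"
    have "p' \<noteq> []" using k unfolding p'_def by simp
    moreover have "hd p' = x" using k unfolding p'_def by (simp add: hd_drop_conv_nth)
    moreover have "last p' = y" using k p(3) unfolding p'_def by simp
    moreover have "set p' \<subseteq> X" using p(4) unfolding p'_def by (meson order_trans set_drop_subset)
    moreover have "gpath V adj p'"
      using p(1) k unfolding gpath_def p'_def
      by (auto simp: nth_drop dest: in_set_dropD)
    ultimately show ?thesis by blast
  next
    case False
    have pn: "p \<noteq> []" using p(1) unfolding gpath_def by simp
    have "gpath V adj (x # p)"
      unfolding gpath_def
    proof (intro conjI allI impI)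
      show "distinct (x # p)" using False p(1) unfolding gpath_def by simp
      show "set (x # p) \<subseteq> V" using p(1) step.prems unfolding gpath_def by auto
      fix i assume i: "Suc i < length (x # p)"
      show "adj ((x # p) ! i) ((x # p) ! Suc i)"
      proof (cases i)
        case 0 then show ?thesis using axx p(2) pn by (simp add: hd_conv_nth)
      next
        case (Suc j) then show ?thesis using p(1) i unfolding gpath_def by simp
      qed
    qed simp
    moreover have "set (x # p) \<subseteq> X" using p(4) step.prems by auto
    ultimately show ?thesis using p(3) pn by (intro exI[of _ "x # p"]) auto
  qed
qed

definition lives :: "(nat \<Rightarrow> 'a) \<Rightarrow> 'a set \<Rightarrow> bool" where
  "lives q D \<longleftrightarrow> (\<exists>N. \<forall>n\<ge>N. q n \<in> D)"

lemma ray_avoid: "ray V adj q \<Longrightarrow> finite T \<Longrightarrow> \<exists>N. \<forall>n\<ge>N. q n \<notin> T"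
proof -
  assume r: "ray V adj q" and T: "finite T"
  have "finite (q -` T)" using r T unfolding ray_def by (simp add: finite_vimageI)
  then obtain N where "\<forall>n\<in>q -` T. n < N" using finite_nat_set_iff_bounded by blast
  then have "\<forall>n\<ge>N. q n \<notin> T" by (meson leD vimageI2)
  then show ?thesis by blast
qed

lemma ray_lives: "ray V adj q \<Longrightarrow> finite T \<Longrightarrow> \<exists>N. q N \<in> V - T \<and> (\<forall>n\<ge>N. q n \<in> cc (V-T) (q N))"
proof -
  assume r: "ray V adj q" and T: "finite T"
  obtain N where N: "\<forall>n\<ge>N. q n \<notin> T" using ray_avoid[OF r T] by blast
  have qV: "q n \<in> V" for n using r unfolding ray_def by auto
  have "q n \<in> cc (V-T) (q N)" if "n \<ge> N" for n
    using that
  proof (induction n rule: dec_induct)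
    case base then show ?case by (rule cc_self)
  next
    case (step n)
    have "rad (V-T) (q n) (q (Suc n))" using r N step.hyps qV unfolding rad_def ray_def by auto
    then show ?case using step.IH cc_step by blast
  qed
  then show ?thesis using N qV by blast
qed

lemma lives_same: "lives q (cc X a) \<Longrightarrow> lives q (cc X b) \<Longrightarrow> b \<in> cc X a"
proof -
  assume "lives q (cc X a)" "lives q (cc X b)"
  then obtain N1 N2 where "\<forall>n\<ge>N1. q n \<in> cc X a" "\<forall>n\<ge>N2. q n \<in> cc X b" unfolding lives_def by blast
  then have "q (max N1 N2) \<in> cc X a" "q (max N1 N2) \<in> cc X b" by auto
  then show ?thesis using cc_eq cc_sym by metis
qed

definition sim :: "(nat \<Rightarrow> 'a) \<Rightarrow> (nat \<Rightarrow> 'a) \<Rightarrow> bool" where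
  "sim q q' \<longleftrightarrow> (\<forall>T. finite T \<longrightarrow> (\<exists>a. lives q (cc (V-T) a) \<and> lives q' (cc (V-T) a)))"

lemma disj_avoid:
  assumes "infinite P" "\<forall>p\<in>P. \<forall>q\<in>P. p \<noteq> q \<longrightarrow> set p \<inter> set q = {}" "finite F"
  shows "\<exists>p\<in>P. set p \<inter> F = {}"
proof -
  have sub: "{p\<in>P. set p \<inter> F \<noteq> {}} \<subseteq> (\<Union>x\<in>F. {p\<in>P. x \<in> set p})" by blast
  have "finite {p\<in>P. x \<in> set p}" for x
  proof (cases "{p\<in>P. x \<in> set p} = {}")
    case True then show ?thesis by (metis finite.emptyI)
  next
    case False
    then obtain p0 where p0: "p0 \<in> P" "x \<in> set p0" by blast
    have "{p\<in>P. x \<in> set p} \<subseteq> {p0}"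
    proof
      fix p assume "p \<in> {p\<in>P. x \<in> set p}"
      then have "p \<in> P" "x \<in> set p" by auto
      then have "p = p0" using assms(2) p0 by blast
      then show "p \<in> {p0}" by simp
    qed
    then show ?thesis using finite_subset by blast
  qed
  then have "finite (\<Union>x\<in>F. {p\<in>P. x \<in> set p})" using assms(3) by blast
  then have "finite {p\<in>P. set p \<inter> F \<noteq> {}}" using sub finite_subset by blast
  then have "infinite (P - {p\<in>P. set p \<inter> F \<noteq> {}})" using assms(1) by simp
  then have "P - {p\<in>P. set p \<inter> F \<noteq> {}} \<noteq> {}" by (metis finite.emptyI)
  then show ?thesis by blast
qed

lemma equiv_sim:
  assumes r: "ray V adj q" "ray V adj q'" and e: "ray_equiv V adj q q'"
  shows "sim q q'"
  unfolding sim_def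
proof (intro allI impI)
  fix T :: "'a set" assume T: "finite T"
  obtain N where N: "q N \<in> V - T" "\<forall>n\<ge>N. q n \<in> cc (V-T) (q N)" using ray_lives[OF r(1) T] by blast
  obtain N' where N': "q' N' \<in> V - T" "\<forall>n\<ge>N'. q' n \<in> cc (V-T) (q' N')" using ray_lives[OF r(2) T] by blast
  obtain P where P: "infinite P" "\<forall>p\<in>P. gpath V adj p \<and> hd p \<in> range q \<and> last p \<in> range q'"
    "\<forall>p\<in>P. \<forall>p'\<in>P. p \<noteq> p' \<longrightarrow> set p \<inter> set p' = {}"
    using e unfolding ray_equiv_def by blast
  define F where "F = T \<union> q ` {..<N} \<union> q' ` {..<N'}"
  have "finite F" using T unfolding F_def by simp
  then obtain p where p: "p \<in> P" "set p \<inter> F = {}" using disj_avoid[OF P(1) P(3)] by blast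
  have gp: "gpath V adj p" and hp: "hd p \<in> range q" and lp: "last p \<in> range q'" using P(2) p(1) by auto
  have pne: "p \<noteq> []" using gp unfolding gpath_def by simp
  obtain i where i: "hd p = q i" using hp by blast
  obtain j where j: "last p = q' j" using lp by blast
  have "hd p \<in> set p" "last p \<in> set p" using pne by auto
  then have "hd p \<notin> F" "last p \<notin> F" using p(2) by auto
  then have iN: "i \<ge> N" and jN: "j \<ge> N'" using i j unfolding F_def by (auto simp: not_le)
  have "set p \<subseteq> V - T" using gp p(2) unfolding gpath_def F_def by auto
  then have w: "(rad (V-T))\<^sup>*\<^sup>* (q i) (q' j)" using gpath_rad[OF gp] i j by simp
  have "q i \<in> cc (V-T) (q N)" using N iN by simp
  then have "q' j \<in> cc (V-T) (q N)" using w unfolding cc_def by (simp add: rtranclp_trans)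
  moreover have "q' j \<in> cc (V-T) (q' N')" using N' jN by simp
  ultimately have ceq: "cc (V-T) (q' N') = cc (V-T) (q N)" using cc_eq by metis
  have "lives q (cc (V-T) (q N))" using N unfolding lives_def by blast
  moreover have "lives q' (cc (V-T) (q N))" using N' ceq unfolding lives_def by auto
  ultimately show "\<exists>a. lives q (cc (V-T) a) \<and> lives q' (cc (V-T) a)" by blast
qed

lemma sim_step:
  assumes r: "ray V adj q" "ray V adj q'" and s: "sim q q'" and F: "finite F"
  shows "\<exists>p. gpath V adj p \<and> hd p \<in> range q \<and> last p \<in> range q' \<and> set p \<inter> F = {}"
proof -
  obtain a where a: "lives q (cc (V-F) a)" "lives q' (cc (V-F) a)" using s F unfolding sim_def by blast
  obtain N1 where N1: "\<forall>n\<ge>N1. q n \<in> cc (V-F) a" using a(1) unfolding lives_def by blast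
  obtain N2 where N2: "\<forall>n\<ge>N2. q' n \<in> cc (V-F) a" using a(2) unfolding lives_def by blast
  obtain N3 where N3: "\<forall>n\<ge>N3. q n \<notin> F" using ray_avoid[OF r(1) F] by blast
  define n where "n = max N1 N3"
  have qn: "q n \<in> cc (V-F) a" "q n \<notin> F" using N1 N3 unfolding n_def by auto
  have "q n \<in> V" using r(1) unfolding ray_def by auto
  have q'm: "q' N2 \<in> cc (V-F) a" using N2 by simp
  have "(rad (V-F))\<^sup>*\<^sup>* (q n) (q' N2)"
  proof -
    have "(rad (V-F))\<^sup>*\<^sup>* a (q n)" "(rad (V-F))\<^sup>*\<^sup>* a (q' N2)" using qn(1) q'm unfolding cc_def by auto
    then show ?thesis using rad_sym rtranclp_trans by metis
  qed
  then obtain p where p: "gpath V adj p" "hd p = q n" "last p = q' N2" "set p \<subseteq> V - F"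
    using walk_path[of "V-F" "q n" "q' N2"] qn \<open>q n \<in> V\<close> by auto
  then show ?thesis by blast
qed

lemma sim_equiv:
  assumes r: "ray V adj q" "ray V adj q'" and s: "sim q q'"
  shows "ray_equiv V adj q q'"
proof -
  define good where "good F p \<longleftrightarrow> gpath V adj p \<and> hd p \<in> range q \<and> last p \<in> range q' \<and> set p \<inter> F = {}" for F p
  define np where "np F = (SOME p. good F p)" for F
  have np: "finite F \<Longrightarrow> good F (np F)" for F
  proof -
    assume "finite F"
    then have "\<exists>p. good F p" using sim_step[OF r s] unfolding good_def by blast
    then show "good F (np F)" unfolding np_def by (rule someI_ex)
  qed
  define Lf where "Lf = rec_nat [] (\<lambda>_ l. l @ [np (\<Union> (set ` set l))])"
  have Lf0: "Lf 0 = []" and LfS: "Lf (Suc n) = Lf n @ [np (\<Union> (set ` set (Lf n)))]" for n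
    unfolding Lf_def by simp_all
  define pp where "pp n = np (\<Union> (set ` set (Lf n)))" for n
  have gpp: "good (\<Union> (set ` set (Lf n))) (pp n)" for n
    unfolding pp_def by (rule np) simp
  have mem: "m < n \<Longrightarrow> pp m \<in> set (Lf n)" for m n
  proof (induction n)
    case 0 then show ?case by simp
  next
    case (Suc n)
    show ?case
    proof (cases "m = n")
      case True then show ?thesis by (simp add: LfS pp_def)
    next
      case False then have "m < n" using Suc.prems by simp
      then show ?thesis using Suc.IH by (simp add: LfS)
    qed
  qed
  have disj: "m < n \<Longrightarrow> set (pp m) \<inter> set (pp n) = {}" for m n
    using gpp[of n] mem[of m n] unfolding good_def by blast
  have ne: "pp n \<noteq> []" for n using gpp[of n] unfolding good_def gpath_def by simp
  have disj2: "set (pp m) \<inter> set (pp n) = {}" if mn: "m \<noteq> n" for m n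
  proof (cases "m < n")
    case True then show ?thesis by (rule disj)
  next
    case False then have "n < m" using mn by simp
    then show ?thesis using disj[of n m] by blast
  qed
  have "inj pp"
  proof (rule injI)
    fix m n assume "pp m = pp n"
    show "m = n"
    proof (rule ccontr)
      assume "m \<noteq> n"
      then have "set (pp m) \<inter> set (pp n) = {}" by (rule disj2)
      then have "set (pp m) = {}" using \<open>pp m = pp n\<close> by simp
      then show False using ne[of m] by simp
    qed
  qed
  then have i1: "infinite (range pp)" using infinite_iff_countable_subset by blast
  have i2: "\<forall>p\<in>range pp. gpath V adj p \<and> hd p \<in> range q \<and> last p \<in> range q'"
  proof
    fix p assume "p \<in> range pp"
    then obtain n where "p = pp n" by blast
    then show "gpath V adj p \<and> hd p \<in> range q \<and> last p \<in> range q'" using gpp[of n] unfolding good_def by simp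
  qed
  have i3: "\<forall>p\<in>range pp. \<forall>p'\<in>range pp. p \<noteq> p' \<longrightarrow> set p \<inter> set p' = {}"
  proof (intro ballI impI)
    fix p p' assume "p \<in> range pp" "p' \<in> range pp" "p \<noteq> p'"
    then obtain m n where "p = pp m" "p' = pp n" "m \<noteq> n" by blast
    then show "set p \<inter> set p' = {}" using disj2 by simp
  qed
  show ?thesis unfolding ray_equiv_def by (rule exI[of _ "range pp"]) (use i1 i2 i3 in simp)
qed

lemma equiv_refl: "ray V adj q \<Longrightarrow> ray_equiv V adj q q"
proof -
  assume r: "ray V adj q"
  define pp where "pp n = [q n]" for n
  have "inj pp" unfolding pp_def using r unfolding ray_def by (simp add: inj_def)
  then have "infinite (range pp)" using infinite_iff_countable_subset by blast
  moreover have "\<forall>p\<in>range pp. gpath V adj p \<and> hd p \<in> range q \<and> last p \<in> range q"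
    using r unfolding pp_def ray_def gpath_def by auto
  moreover have "\<forall>p\<in>range pp. \<forall>p'\<in>range pp. p \<noteq> p' \<longrightarrow> set p \<inter> set p' = {}"
    unfolding pp_def by auto
  ultimately show ?thesis unfolding ray_equiv_def by blast
qed

lemma sim_trans: "sim q q' \<Longrightarrow> sim q' q'' \<Longrightarrow> sim q q''"
  unfolding sim_def
proof (intro allI impI)
  fix T :: "'a set"
  assume a: "\<forall>T. finite T \<longrightarrow> (\<exists>a. lives q (cc (V - T) a) \<and> lives q' (cc (V - T) a))"
    and b: "\<forall>T. finite T \<longrightarrow> (\<exists>a. lives q' (cc (V - T) a) \<and> lives q'' (cc (V - T) a))"
    and T: "finite T"
  obtain x where x: "lives q (cc (V - T) x)" "lives q' (cc (V - T) x)" using a T by blast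
  obtain y where y: "lives q' (cc (V - T) y)" "lives q'' (cc (V - T) y)" using b T by blast
  have "y \<in> cc (V-T) x" using lives_same[OF x(2) y(1)] .
  then have "cc (V-T) y = cc (V-T) x" by (rule cc_eq)
  then show "\<exists>a. lives q (cc (V - T) a) \<and> lives q'' (cc (V - T) a)" using x y by auto
qed

lemma sim_sym: "sim q q' \<Longrightarrow> sim q' q"
  unfolding sim_def by blast

lemma cc_split: "(rad X)\<^sup>*\<^sup>* v y \<Longrightarrow> y = v \<or> (\<exists>w. rad X v w \<and> w \<noteq> v \<and> y \<in> cc (X - {v}) w)"
proof (induction rule: rtranclp_induct)
  case base then show ?case by simp
next
  case (step y z)
  show ?case
  proof (cases "z = v")
    case True then show ?thesis by simp
  next
    case zv: False
    show ?thesis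
    proof (cases "y = v")
      case True then show ?thesis using step.hyps(2) zv cc_self by blast
    next
      case False
      then obtain w where w: "rad X v w" "w \<noteq> v" "y \<in> cc (X - {v}) w" using step.IH by blast
      have "rad (X - {v}) y z" using step.hyps(2) False zv unfolding rad_def by auto
      then show ?thesis using w cc_step by blast
    qed
  qed
qed

lemma konig_step:
  assumes "infinite (cc X v)"
  shows "\<exists>w. rad X v w \<and> w \<noteq> v \<and> infinite (cc (X - {v}) w)"
proof (rule ccontr)
  assume "\<not> ?thesis"
  then have fin: "\<forall>w\<in>{w. rad X v w \<and> w \<noteq> v}. finite (cc (X - {v}) w)" by blast
  have "{w. rad X v w \<and> w \<noteq> v} \<subseteq> {w. adj v w}" unfolding rad_def by blast
  then have "finite {w. rad X v w \<and> w \<noteq> v}" using nbr_fin finite_subset by blast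
  then have "finite (insert v (\<Union>w\<in>{w. rad X v w \<and> w \<noteq> v}. cc (X - {v}) w))" using fin by blast
  moreover have "cc X v \<subseteq> insert v (\<Union>w\<in>{w. rad X v w \<and> w \<noteq> v}. cc (X - {v}) w)"
    using cc_split unfolding cc_def[of X v] by blast
  ultimately show False using assms finite_subset by blast
qed

lemma konig:
  assumes "x0 \<in> X" "infinite (cc X x0)"
  shows "\<exists>r. ray V adj r \<and> range r \<subseteq> cc X x0"
proof -
  define nx where "nx = (\<lambda>(v,Y). (SOME w. rad Y v w \<and> w \<noteq> v \<and> infinite (cc (Y - {v}) w), Y - {v}))"
  define st where "st n = (nx ^^ n) (x0, X)" for n
  define I where "I = (\<lambda>(v,Y). v \<in> Y \<and> Y \<subseteq> X \<and> infinite (cc Y v))"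
  have stS: "st (Suc n) = nx (st n)" for n unfolding st_def by simp
  have step: "I (st n) \<and> rad (snd (st n)) (fst (st n)) (fst (st (Suc n))) \<and> snd (st (Suc n)) = snd (st n) - {fst (st n)}" for n
  proof (induction n)
    case 0
    obtain w where w: "rad X x0 w \<and> w \<noteq> x0 \<and> infinite (cc (X - {x0}) w)" using konig_step assms(2) by blast
    have "st 0 = (x0, X)" unfolding st_def by simp
    moreover have "st (Suc 0) = (SOME w. rad X x0 w \<and> w \<noteq> x0 \<and> infinite (cc (X - {x0}) w), X - {x0})"
      unfolding stS by (simp add: calculation nx_def)
    moreover have "rad X x0 (SOME w. rad X x0 w \<and> w \<noteq> x0 \<and> infinite (cc (X - {x0}) w))"
      using someI_ex[of "\<lambda>w. rad X x0 w \<and> w \<noteq> x0 \<and> infinite (cc (X - {x0}) w)"] w by blast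
    ultimately show ?case using assms unfolding I_def by simp
  next
    case (Suc n)
    obtain v Y where st: "st n = (v, Y)" by fastforce
    define w where "w = (SOME w. rad Y v w \<and> w \<noteq> v \<and> infinite (cc (Y - {v}) w))"
    have sSn: "st (Suc n) = (w, Y - {v})" unfolding stS st nx_def w_def by simp
    have Iv: "v \<in> Y" "Y \<subseteq> X" "infinite (cc Y v)" using Suc.IH st unfolding I_def by auto
    have wp: "rad Y v w \<and> w \<noteq> v \<and> infinite (cc (Y - {v}) w)"
      unfolding w_def using konig_step[OF Iv(3)] by (rule someI_ex)
    have I1: "I (st (Suc n))" using sSn wp Iv unfolding I_def rad_def by auto
    obtain w' where w': "rad (Y - {v}) w w' \<and> w' \<noteq> w \<and> infinite (cc (Y - {v} - {w}) w')"
      using konig_step wp by blast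
    define u where "u = (SOME w'. rad (Y - {v}) w w' \<and> w' \<noteq> w \<and> infinite (cc (Y - {v} - {w}) w'))"
    have sSSn: "st (Suc (Suc n)) = (u, Y - {v} - {w})" unfolding stS[of "Suc n"] sSn nx_def u_def by simp
    have "rad (Y - {v}) w u" unfolding u_def using someI_ex[of "\<lambda>w'. rad (Y - {v}) w w' \<and> w' \<noteq> w \<and> infinite (cc (Y - {v} - {w}) w')"] w' by blast
    then show ?case using I1 sSn sSSn by simp
  qed
  define r where "r n = fst (st n)" for n
  have adjr: "adj (r n) (r (Suc n))" for n using step[of n] unfolding r_def rad_def by blast
  have rin: "r n \<in> snd (st n)" for n using step[of n] unfolding r_def I_def by (auto split: prod.splits)
  have dec: "snd (st (n + k)) \<subseteq> snd (st n)" for n k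
    by (induction k) (use step in auto)
  have "inj r"
  proof (rule injI)
    fix m n assume eq: "r m = r n"
    show "m = n"
    proof (rule ccontr)
      assume "m \<noteq> n"
      then consider "m < n" | "n < m" by linarith
      then show False
      proof cases
        case 1
        then obtain k where "n = Suc m + k" using less_iff_Suc_add by blast
        then have "r n \<in> snd (st (Suc m))" using rin[of n] dec[of "Suc m" k] by auto
        then show False using step[of m] eq unfolding r_def by auto
      next
        case 2
        then obtain k where "m = Suc n + k" using less_iff_Suc_add by blast
        then have "r m \<in> snd (st (Suc n))" using rin[of m] dec[of "Suc n" k] by auto
        then show False using step[of n] eq unfolding r_def by auto
      qed
    qed
  qed
  moreover have "r n \<in> cc X x0" for n
  proof (induction n)
    case 0 then show ?case unfolding r_def st_def by (simp add: cc_self)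
  next
    case (Suc n)
    have "rad X (r n) (r (Suc n))" using step[of n] unfolding r_def I_def rad_def by (auto split: prod.splits)
    then show ?case using Suc cc_step by blast
  qed
  moreover have "range r \<subseteq> V" using adjr adj_V by blast
  ultimately show ?thesis unfolding ray_def using adjr by blast
qed

lemma reach_T:
  assumes "adj\<^sup>*\<^sup>* y w" "w \<in> T" "y \<in> V - T"
  shows "\<exists>z. z \<in> cc (V-T) y \<and> (\<exists>t\<in>T. adj z t)"
  using assms
proof (induction rule: converse_rtranclp_induct)
  case base then show ?case by simp
next
  case (step y y')
  show ?case
  proof (cases "y' \<in> T")
    case True then show ?thesis using step cc_self by blast
  next
    case False
    then have "y' \<in> V - T" using step.hyps(1) adj_V by blast
    then obtain z where z: "z \<in> cc (V-T) y'" "\<exists>t\<in>T. adj z t" using step.IH step.prems by blast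
    have "rad (V-T) y y'" using step.hyps(1) step.prems(2) \<open>y' \<in> V - T\<close> unfolding rad_def by blast
    then have "y' \<in> cc (V-T) y" using cc_self cc_step by blast
    then have "z \<in> cc (V-T) y" using z(1) cc_eq by blast
    then show ?thesis using z(2) by blast
  qed
qed

lemma comp_nb:
  assumes "T \<inter> V \<noteq> {}" "y \<in> V - T"
  shows "\<exists>z. z \<in> cc (V-T) y \<and> (\<exists>t\<in>T. adj z t)"
proof -
  obtain w where "w \<in> T" "w \<in> V" using assms by blast
  then show ?thesis using reach_T[of y w T] conn_V assms by blast
qed

definition Nb :: "'a set \<Rightarrow> 'a set" where "Nb T = {z. \<exists>t\<in>T. adj t z}"

lemma Nb_fin: "finite T \<Longrightarrow> finite (Nb T)"
proof -
  assume "finite T"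
  moreover have "Nb T = (\<Union>t\<in>T. {z. adj t z})" unfolding Nb_def by blast
  ultimately show ?thesis using nbr_fin by simp
qed

lemma fin_union_comps:
  assumes T: "finite T" "T \<inter> V \<noteq> {}" and Z: "Z \<subseteq> V - T" "\<forall>z\<in>Z. cc (V-T) z \<subseteq> Z"
    and fin: "\<forall>z\<in>Z. finite (cc (V-T) z)"
  shows "finite Z"
proof -
  have "Z \<subseteq> (\<Union>z\<in>Nb T \<inter> Z. cc (V-T) z)"
  proof
    fix y assume y: "y \<in> Z"
    then obtain z t where z: "z \<in> cc (V-T) y" "t \<in> T" "adj z t" using comp_nb[OF T(2)] Z(1) by blast
    have "z \<in> Z" using z(1) y Z(2) by blast
    moreover have "z \<in> Nb T" using z adj_sym unfolding Nb_def by blast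
    moreover have "y \<in> cc (V-T) z" using z(1) cc_sym by blast
    ultimately show "y \<in> (\<Union>z\<in>Nb T \<inter> Z. cc (V-T) z)" by blast
  qed
  moreover have "finite (\<Union>z\<in>Nb T \<inter> Z. cc (V-T) z)" using Nb_fin[OF T(1)] fin by blast
  ultimately show ?thesis using finite_subset by blast
qed

lemma fin_or_ray:
  assumes T: "finite T" "T \<inter> V \<noteq> {}" and Z: "Z \<subseteq> V - T" "\<forall>z\<in>Z. cc (V-T) z \<subseteq> Z"
    and nr: "\<forall>r. ray V adj r \<longrightarrow> \<not> range r \<subseteq> Z"
  shows "finite Z"
proof (rule fin_union_comps[OF T Z], rule ccontr)
  assume "\<not> (\<forall>z\<in>Z. finite (cc (V - T) z))"
  then obtain z where z: "z \<in> Z" "infinite (cc (V-T) z)" by blast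
  then have "z \<in> V - T" using Z by blast
  then obtain r where "ray V adj r" "range r \<subseteq> cc (V-T) z" using konig z(2) by blast
  then show False using nr Z(2) z(1) by blast
qed

end

context G begin

lemma aut_bij: "automorphism V adj f \<Longrightarrow> bij_betw f V V"
  unfolding automorphism_def by blast
lemma aut_in: "automorphism V adj f \<Longrightarrow> x \<in> V \<Longrightarrow> f x \<in> V"
  unfolding automorphism_def bij_betw_def by blast
lemma aut_inj: "automorphism V adj f \<Longrightarrow> inj_on f V"
  unfolding automorphism_def bij_betw_def by blast
lemma aut_img: "automorphism V adj f \<Longrightarrow> f ` V = V"
  unfolding automorphism_def bij_betw_def by blast
lemma aut_adj: "automorphism V adj f \<Longrightarrow> adj u v \<Longrightarrow> adj (f u) (f v)"
  unfolding automorphism_def using adj_V by blast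
lemma aut_adj_iff: "automorphism V adj f \<Longrightarrow> u \<in> V \<Longrightarrow> v \<in> V \<Longrightarrow> adj (f u) (f v) \<longleftrightarrow> adj u v"
  unfolding automorphism_def by blast

lemma aut_inv_l: "automorphism V adj f \<Longrightarrow> x \<in> V \<Longrightarrow> inv_into V f (f x) = x"
  using aut_inj by (simp add: inv_into_f_f)
lemma aut_inv_r: "automorphism V adj f \<Longrightarrow> y \<in> V \<Longrightarrow> f (inv_into V f y) = y"
  using aut_img by (metis f_inv_into_f)
lemma aut_inv: "automorphism V adj f \<Longrightarrow> automorphism V adj (inv_into V f)"
proof -
  assume a: "automorphism V adj f"
  have b: "bij_betw (inv_into V f) V V" using aut_bij[OF a] by (simp add: bij_betw_inv_into)
  have "\<forall>u\<in>V. \<forall>v\<in>V. adj u v \<longleftrightarrow> adj (inv_into V f u) (inv_into V f v)"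
  proof (intro ballI)
    fix u v assume u: "u \<in> V" and v: "v \<in> V"
    have "inv_into V f u \<in> V" "inv_into V f v \<in> V" using b u v unfolding bij_betw_def by auto
    then show "adj u v \<longleftrightarrow> adj (inv_into V f u) (inv_into V f v)"
      using aut_adj_iff[OF a] aut_inv_r[OF a] u v by metis
  qed
  then show ?thesis using b unfolding automorphism_def by blast
qed

lemma aut_comp: assumes f: "automorphism V adj f" and g: "automorphism V adj g"
  shows "automorphism V adj (f \<circ> g)"
proof -
  have "bij_betw (f \<circ> g) V V" using aut_bij[OF g] aut_bij[OF f] by (rule bij_betw_trans)
  moreover have "\<forall>u\<in>V. \<forall>v\<in>V. adj u v \<longleftrightarrow> adj ((f \<circ> g) u) ((f \<circ> g) v)"
    using aut_adj_iff[OF f] aut_adj_iff[OF g] aut_in[OF g] by simp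
  ultimately show ?thesis unfolding automorphism_def by blast
qed

lemma aut_id: "automorphism V adj id"
  unfolding automorphism_def by simp

lemma aut_rad: "automorphism V adj f \<Longrightarrow> (rad X)\<^sup>*\<^sup>* x y \<Longrightarrow> (rad (f ` X))\<^sup>*\<^sup>* (f x) (f y)"
proof -
  assume a: "automorphism V adj f" and r: "(rad X)\<^sup>*\<^sup>* x y"
  from r show ?thesis
  proof (induction rule: rtranclp_induct)
    case base then show ?case by simp
  next
    case (step y z)
    have "rad (f ` X) (f y) (f z)" using step.hyps(2) aut_adj[OF a] unfolding rad_def by blast
    then show ?case using step.IH by (simp add: rtranclp.rtrancl_into_rtrancl)
  qed
qed

lemma aut_cc: "automorphism V adj f \<Longrightarrow> f ` cc X x \<subseteq> cc (f ` X) (f x)"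
  unfolding cc_def using aut_rad by blast

lemma aut_diff: assumes a: "automorphism V adj f" and T: "T \<subseteq> V" shows "f ` (V - T) = V - f ` T"
proof -
  have "f ` (V - T) = f ` V - f ` T" using inj_on_image_set_diff[OF aut_inj[OF a], of V T] T by blast
  then show ?thesis using aut_img[OF a] by simp
qed

lemma aut_inv_img: "automorphism V adj f \<Longrightarrow> T \<subseteq> V \<Longrightarrow> inv_into V f ` (f ` T) = T"
  using aut_inj by (simp add: inv_into_image_cancel)

lemma aut_cc_diff: assumes a: "automorphism V adj f" and T: "T \<subseteq> V" shows "f ` cc (V - T) x \<subseteq> cc (V - f ` T) (f x)"
  using aut_cc[OF a, of "V-T" x] aut_diff[OF a T] by simp

lemma aut_cc_refl:
  assumes a: "automorphism V adj f" and T: "T \<subseteq> V" and x: "x \<in> V" and y: "y \<in> V"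
    and fy: "f y \<in> cc (V - f ` T) (f x)"
  shows "y \<in> cc (V - T) x"
proof -
  let ?h = "inv_into V f"
  have ha: "automorphism V adj ?h" using aut_inv[OF a] .
  have fT: "f ` T \<subseteq> V" using T aut_in[OF a] by blast
  have "?h (f y) \<in> cc (V - ?h ` (f ` T)) (?h (f x))" using aut_cc_diff[OF ha fT] fy by blast
  then show ?thesis using aut_inv_l[OF a] x y aut_inv_img[OF a T] by simp
qed

lemma aut_ray: "automorphism V adj f \<Longrightarrow> ray V adj q \<Longrightarrow> ray V adj (f \<circ> q)"
  unfolding ray_def
proof (intro conjI)
  assume a: "automorphism V adj f" and r: "inj q \<and> range q \<subseteq> V \<and> (\<forall>n. adj (q n) (q (Suc n)))"
  have "inj_on f (range q)" using aut_inj[OF a] r inj_on_subset by blast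
  then show "inj (f \<circ> q)" using r comp_inj_on by blast
  show "range (f \<circ> q) \<subseteq> V" using r aut_in[OF a] by auto
  show "\<forall>n. adj ((f \<circ> q) n) ((f \<circ> q) (Suc n))" using r aut_adj[OF a] by simp
qed

lemma aut_lives: assumes a: "automorphism V adj f" and T: "T \<subseteq> V" and l: "lives q (cc (V - T) b)"
  shows "lives (f \<circ> q) (cc (V - f ` T) (f b))"
proof -
  obtain N where N: "\<forall>n\<ge>N. q n \<in> cc (V - T) b" using l unfolding lives_def by blast
  have "\<forall>n\<ge>N. f (q n) \<in> cc (V - f ` T) (f b)" using N aut_cc_diff[OF a T, of b] by blast
  then show ?thesis unfolding lives_def by auto
qed

lemma cc_VT: "cc (V - T) a = cc (V - (T \<inter> V)) a"
proof -
  have "V - T = V - (T \<inter> V)" by blast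
  then show ?thesis by simp
qed

lemma aut_sim:
  assumes a: "automorphism V adj f" and s: "sim q q'"
  shows "sim (f \<circ> q) (f \<circ> q')"
  unfolding sim_def
proof (intro allI impI)
  fix T :: "'a set" assume T: "finite T"
  let ?h = "inv_into V f"
  define T' where "T' = ?h ` (T \<inter> V)"
  have T'V: "T' \<subseteq> V" unfolding T'_def using aut_in[OF aut_inv[OF a]] by blast
  have fT': "f ` T' = T \<inter> V" unfolding T'_def using aut_inv_r[OF a] by force
  obtain b where b: "lives q (cc (V - T') b)" "lives q' (cc (V - T') b)" using s T unfolding sim_def T'_def by blast
  have "lives (f \<circ> q) (cc (V - (T \<inter> V)) (f b))" "lives (f \<circ> q') (cc (V - (T \<inter> V)) (f b))"
    using aut_lives[OF a T'V] b fT' by metis+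
  then show "\<exists>a. lives (f \<circ> q) (cc (V - T) a) \<and> lives (f \<circ> q') (cc (V - T) a)"
    using cc_VT by metis
qed

lemma aut_sim_refl:
  assumes a: "automorphism V adj f" and r: "ray V adj q" "ray V adj q'" and s: "sim (f \<circ> q) (f \<circ> q')"
  shows "sim q q'"
proof -
  let ?h = "inv_into V f"
  have "sim (?h \<circ> (f \<circ> q)) (?h \<circ> (f \<circ> q'))" using aut_sim[OF aut_inv[OF a] s] .
  moreover have "?h \<circ> (f \<circ> q) = q" "?h \<circ> (f \<circ> q') = q'"
    using r aut_inv_l[OF a] unfolding ray_def by (auto simp: fun_eq_iff range_subsetD)
  ultimately show ?thesis by simp
qed

lemma sim_comp:
  assumes "sim q q'" "finite T" "lives q (cc (V - T) a)" "lives q' (cc (V - T) b)"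
  shows "b \<in> cc (V - T) a"
proof -
  obtain c where c: "lives q (cc (V - T) c)" "lives q' (cc (V - T) c)" using assms unfolding sim_def by blast
  have "a \<in> cc (V - T) c" using lives_same[OF c(1) assms(3)] .
  moreover have "b \<in> cc (V - T) c" using lives_same[OF c(2) assms(4)] .
  ultimately show ?thesis using cc_eq[of a "V - T" c] by simp
qed

lemma ray_cc: "ray V adj q \<Longrightarrow> range q \<subseteq> X \<Longrightarrow> range q \<subseteq> cc X (q 0)"
proof -
  assume r: "ray V adj q" and X: "range q \<subseteq> X"
  have "q n \<in> cc X (q 0)" for n
  proof (induction n)
    case 0 then show ?case by (rule cc_self)
  next
    case (Suc n)
    have "rad X (q n) (q (Suc n))" using r X unfolding ray_def rad_def by auto
    then show ?case using Suc cc_step by blast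
  qed
  then show ?thesis by blast
qed

lemma range_lives: "range q \<subseteq> D \<Longrightarrow> lives q D"
  unfolding lives_def by blast

lemma cc_within: "y \<in> cc X x \<Longrightarrow> (rad (cc X x))\<^sup>*\<^sup>* x y"
proof -
  assume "y \<in> cc X x"
  then have "(rad X)\<^sup>*\<^sup>* x y" unfolding cc_def by simp
  then show ?thesis
  proof (induction rule: rtranclp_induct)
    case base then show ?case by simp
  next
    case (step y z)
    have "y \<in> cc X x" "z \<in> cc X x" using step.hyps unfolding cc_def by (auto intro: rtranclp.rtrancl_into_rtrancl)
    then have "rad (cc X x) y z" using step.hyps(2) unfolding rad_def by simp
    then show ?case using step.IH by (simp add: rtranclp.rtrancl_into_rtrancl)
  qed
qed

end

context G begin

lemma lives_mono: "lives q A \<Longrightarrow> A \<subseteq> B \<Longrightarrow> lives q B"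
  unfolding lives_def by blast

lemma two_ends:
  assumes "card (ends V adj) = 2"
  shows "\<exists>r1 r2. ray V adj r1 \<and> ray V adj r2 \<and> \<not> sim r1 r2 \<and> (\<forall>q. ray V adj q \<longrightarrow> sim r1 q \<or> sim r2 q)"
proof -
  obtain X Y where XY: "ends V adj = {X, Y}" "X \<noteq> Y" using assms unfolding card_2_iff by blast
  have "X \<in> ends V adj" using XY by simp
  then obtain r1 where r1: "X = {s. ray V adj s \<and> ray_equiv V adj r1 s}" "ray V adj r1"
    unfolding ends_def by (auto simp only: mem_Collect_eq)
  have "Y \<in> ends V adj" using XY by simp
  then obtain r2 where r2: "Y = {s. ray V adj s \<and> ray_equiv V adj r2 s}" "ray V adj r2"
    unfolding ends_def by (auto simp only: mem_Collect_eq)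
  have cls: "ray_equiv V adj r s \<longleftrightarrow> sim r s" if "ray V adj r" "ray V adj s" for r s
    using equiv_sim sim_equiv that by blast
  have ns: "\<not> sim r1 r2"
  proof
    assume s: "sim r1 r2"
    have "X = Y"
    proof (rule set_eqI)
      fix t
      have "t \<in> X \<longleftrightarrow> ray V adj t \<and> sim r1 t" using r1 cls[of r1 t] by auto
      also have "\<dots> \<longleftrightarrow> ray V adj t \<and> sim r2 t" using s sim_trans[of r2 r1 t] sim_trans[of r1 r2 t] sim_sym[of r1 r2] by auto
      also have "\<dots> \<longleftrightarrow> t \<in> Y" using r2 cls[of r2 t] by auto
      finally show "t \<in> X \<longleftrightarrow> t \<in> Y" .
    qed
    then show False using XY by simp
  qed
  have "\<forall>q. ray V adj q \<longrightarrow> sim r1 q \<or> sim r2 q"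
  proof (intro allI impI)
    fix q assume q: "ray V adj q"
    have "{s. ray V adj s \<and> ray_equiv V adj q s} \<in> ends V adj" unfolding ends_def using q by blast
    then have "{s. ray V adj s \<and> ray_equiv V adj q s} = X \<or> {s. ray V adj s \<and> ray_equiv V adj q s} = Y"
      using XY by simp
    moreover have "q \<in> {s. ray V adj s \<and> ray_equiv V adj q s}" using q equiv_refl by simp
    ultimately have "q \<in> X \<or> q \<in> Y" by metis
    then show "sim r1 q \<or> sim r2 q" using r1 r2 q cls[of r1 q] cls[of r2 q] by auto
  qed
  then show ?thesis using r1 r2 ns by blast
qed

lemma adj_rad_V: "adj\<^sup>*\<^sup>* x y \<Longrightarrow> (rad V)\<^sup>*\<^sup>* x y"
proof (induction rule: rtranclp_induct)
  case base then show ?case by simp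
next
  case (step y z)
  then have "rad V y z" using adj_V unfolding rad_def by blast
  then show ?case using step.IH by (simp add: rtranclp.rtrancl_into_rtrancl)
qed

lemma gpath_reach:
  assumes g: "gpath V adj p" and s: "s \<in> set p"
  shows "(rad (set p))\<^sup>*\<^sup>* (hd p) s"
proof -
  obtain k where k: "k < length p" "p ! k = s" using s by (meson in_set_conv_nth)
  define p' where "p' = take (Suc k) p"
  have len: "length p' = Suc k" using k unfolding p'_def by simp
  have ne: "p' \<noteq> []" using len by auto
  have ch: "\<forall>i. Suc i < length p' \<longrightarrow> adj (p' ! i) (p' ! Suc i)"
    using g len unfolding gpath_def p'_def by simp
  have st: "set p' \<subseteq> set p" unfolding p'_def by (rule set_take_subset)
  have "(rad (set p))\<^sup>*\<^sup>* (hd p') (last p')" using gpath_chain_rad[OF ne ch st] .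
  moreover have "hd p' = hd p" using k unfolding p'_def by (cases p) auto
  moreover have "last p' = s"
  proof -
    have "last p' = p' ! k" using ne len by (simp add: last_conv_nth)
    also have "\<dots> = p ! k" unfolding p'_def by simp
    finally show ?thesis using k by simp
  qed
  ultimately show ?thesis by simp
qed

lemma conn_sep:
  assumes T: "finite T" and v0: "v0 \<in> V"
  shows "\<exists>S. finite S \<and> S \<subseteq> V \<and> v0 \<in> S \<and> T \<inter> V \<subseteq> S \<and> (\<forall>s\<in>S. (rad S)\<^sup>*\<^sup>* v0 s)"
proof -
  have "\<forall>t\<in>T \<inter> V. \<exists>p. gpath V adj p \<and> hd p = v0 \<and> last p = t \<and> set p \<subseteq> V"
  proof
    fix t assume t: "t \<in> T \<inter> V"
    have "(rad V)\<^sup>*\<^sup>* v0 t" using adj_rad_V conn_V v0 t by blast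
    then show "\<exists>p. gpath V adj p \<and> hd p = v0 \<and> last p = t \<and> set p \<subseteq> V"
      using walk_path[of V v0 t] v0 by blast
  qed
  from bchoice[OF this] obtain P where P: "\<forall>t\<in>T \<inter> V. gpath V adj (P t) \<and> hd (P t) = v0 \<and> last (P t) = t \<and> set (P t) \<subseteq> V"
    by blast
  define S where "S = insert v0 (\<Union>t\<in>T \<inter> V. set (P t))"
  have "finite S" unfolding S_def using T by simp
  moreover have "S \<subseteq> V"
  proof -
    have "set (P t) \<subseteq> V" if "t \<in> T \<inter> V" for t using P that by simp
    then show ?thesis unfolding S_def using v0 by auto
  qed
  moreover have "T \<inter> V \<subseteq> S"
  proof
    fix t assume t: "t \<in> T \<inter> V"
    have Pt: "gpath V adj (P t)" "last (P t) = t" using P t by simp_all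
    then have "P t \<noteq> []" unfolding gpath_def by simp
    then have "last (P t) \<in> set (P t)" by simp
    then have "t \<in> set (P t)" using Pt by simp
    then show "t \<in> S" using t unfolding S_def by blast
  qed
  moreover have "\<forall>s\<in>S. (rad S)\<^sup>*\<^sup>* v0 s"
  proof
    fix s assume "s \<in> S"
    then consider "s = v0" | t where "t \<in> T \<inter> V" "s \<in> set (P t)" unfolding S_def by blast
    then show "(rad S)\<^sup>*\<^sup>* v0 s"
    proof cases
      case 1 then show ?thesis by simp
    next
      case 2
      then have "(rad (set (P t)))\<^sup>*\<^sup>* v0 s" using gpath_reach[of "P t" s] P by simp
      moreover have "set (P t) \<subseteq> S" using 2 unfolding S_def by blast
      ultimately show ?thesis using rad_mono by blast
    qed
  qed
  moreover have "v0 \<in> S" unfolding S_def by simp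
  ultimately show ?thesis by blast
qed

lemma comps_fin:
  assumes Sf: "finite S" and SV: "S \<subseteq> V" and s0: "s0 \<in> S"
    and ra: "ray V adj ra" and rb: "ray V adj rb"
    and dich: "\<forall>q. ray V adj q \<longrightarrow> sim ra q \<or> sim rb q"
    and x1: "x1 \<in> V - S" and x2: "x2 \<in> V - S"
    and l1: "lives ra (cc (V-S) x1)" and l2: "lives rb (cc (V-S) x2)"
    and sep: "\<not> (\<exists>a. lives ra (cc (V-S) a) \<and> lives rb (cc (V-S) a))"
  shows "x2 \<notin> cc (V-S) x1" "cc (V-S) x1 \<inter> cc (V-S) x2 = {}"
    "finite (V - S - cc (V-S) x1 - cc (V-S) x2)"
proof -
  define C1 where "C1 = cc (V-S) x1"
  define C2 where "C2 = cc (V-S) x2"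
  show x2C1: "x2 \<notin> cc (V-S) x1"
  proof
    assume "x2 \<in> cc (V-S) x1"
    then have "cc (V-S) x2 = cc (V-S) x1" using cc_eq by blast
    then show False using sep l1 l2 by metis
  qed
  show disj: "cc (V-S) x1 \<inter> cc (V-S) x2 = {}"
  proof (rule ccontr)
    assume "cc (V-S) x1 \<inter> cc (V-S) x2 \<noteq> {}"
    then obtain y where "y \<in> cc (V-S) x1" "y \<in> cc (V-S) x2" by blast
    then have "cc (V-S) y = cc (V-S) x1" "cc (V-S) y = cc (V-S) x2" using cc_eq by blast+
    then have "x2 \<in> cc (V-S) x1" using cc_self[of x2] by auto
    then show False using x2C1 by blast
  qed
  define Z where "Z = V - S - C1 - C2"
  have SV0: "S \<inter> V \<noteq> {}" using s0 SV by blast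
  have "finite Z"
  proof (rule fin_or_ray[OF Sf SV0])
    show "Z \<subseteq> V - S" unfolding Z_def by blast
    show "\<forall>z\<in>Z. cc (V-S) z \<subseteq> Z"
    proof (intro ballI subsetI)
      fix z y assume z: "z \<in> Z" and y: "y \<in> cc (V-S) z"
      have zV: "z \<in> V - S" using z unfolding Z_def by blast
      have "y \<in> V - S" using cc_sub[OF zV] y by blast
      moreover have ccz: "cc (V-S) y = cc (V-S) z" using cc_eq y by blast
      moreover have "y \<notin> C1"
      proof
        assume "y \<in> C1"
        then have "cc (V-S) y = C1" using cc_eq unfolding C1_def by blast
        then have "z \<in> C1" using ccz cc_self[of z] by blast
        then show False using z unfolding Z_def by blast
      qed
      moreover have "y \<notin> C2"
      proof
        assume "y \<in> C2"
        then have "cc (V-S) y = C2" using cc_eq unfolding C2_def by blast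
        then have "z \<in> C2" using ccz cc_self[of z] by blast
        then show False using z unfolding Z_def by blast
      qed
      ultimately show "y \<in> Z" unfolding Z_def by blast
    qed
    show "\<forall>r. ray V adj r \<longrightarrow> \<not> range r \<subseteq> Z"
    proof (intro allI impI notI)
      fix q assume q: "ray V adj q" and qZ: "range q \<subseteq> Z"
      have "range q \<subseteq> V - S" using qZ unfolding Z_def by blast
      then have "range q \<subseteq> cc (V-S) (q 0)" using ray_cc q by blast
      then have lq: "lives q (cc (V-S) (q 0))" by (rule range_lives)
      have qz: "q 0 \<in> Z" using qZ by auto
      from dich q have "sim ra q \<or> sim rb q" by blast
      then show False
      proof
        assume "sim ra q"
        then have "q 0 \<in> cc (V-S) x1" using sim_comp[OF _ Sf l1 lq] by blast
        then show False using qz unfolding C1_def Z_def by blast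
      next
        assume "sim rb q"
        then have "q 0 \<in> cc (V-S) x2" using sim_comp[OF _ Sf l2 lq] by blast
        then show False using qz unfolding C2_def Z_def by blast
      qed
    qed
  qed
  then show "finite (V - S - cc (V-S) x1 - cc (V-S) x2)" unfolding Z_def C1_def C2_def .
qed

end

context G begin

lemma core:
  assumes Sf: "finite S" and SV: "S \<subseteq> V" and s0: "s0 \<in> S"
    and Sc: "\<forall>s\<in>S. (rad S)\<^sup>*\<^sup>* s0 s"
    and ra: "ray V adj ra" and rb: "ray V adj rb"
    and dich: "\<forall>q. ray V adj q \<longrightarrow> sim ra q \<or> sim rb q"
    and x1: "x1 \<in> V - S" and x2: "x2 \<in> V - S"
    and l1: "lives ra (cc (V-S) x1)" and l2: "lives rb (cc (V-S) x2)"
    and sep: "\<not> (\<exists>a. lives ra (cc (V-S) a) \<and> lives rb (cc (V-S) a))"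
    and g: "automorphism V adj g" and ga: "sim (g \<circ> ra) ra" and gb: "sim (g \<circ> rb) rb"
    and gS: "g ` S \<subseteq> cc (V-S) x1"
  shows "\<exists>A. A \<subseteq> V \<and> A \<inter> S = {} \<and> (\<forall>u\<in>A. \<forall>v. adj u v \<longrightarrow> v \<in> A \<union> S) \<and> g ` A \<subseteq> A \<and> g ` S \<subseteq> A \<and> finite (A - g ` A)"
proof -
  note cf = comps_fin[OF Sf SV s0 ra rb dich x1 x2 l1 l2 sep]
  define C1 where "C1 = cc (V-S) x1"
  define C2 where "C2 = cc (V-S) x2"
  have C1V: "C1 \<subseteq> V - S" using cc_sub[OF x1] unfolding C1_def .
  have C2V: "C2 \<subseteq> V - S" using cc_sub[OF x2] unfolding C2_def .
  have x2C1: "x2 \<notin> C1" using cf(1) unfolding C1_def .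
  have disj: "C1 \<inter> C2 = {}" using cf(2) unfolding C1_def C2_def .
  have x1C1: "x1 \<in> C1" unfolding C1_def by (rule cc_self)
  have x2C2: "x2 \<in> C2" unfolding C2_def by (rule cc_self)
  have SV0: "S \<inter> V \<noteq> {}" using s0 SV by blast
  define W where "W = V - C1"
  have SW: "S \<subseteq> W" using C1V SV unfolding W_def by blast
  have Wc: "(rad W)\<^sup>*\<^sup>* s0 y" if y: "y \<in> W" for y
  proof (cases "y \<in> S")
    case True
    then have "(rad S)\<^sup>*\<^sup>* s0 y" using Sc by blast
    then show ?thesis using rad_mono[OF SW] by blast
  next
    case False
    then have yV: "y \<in> V - S" using y unfolding W_def by blast
    obtain z t where zt: "z \<in> cc (V-S) y" "t \<in> S" "adj z t" using comp_nb[OF SV0 yV] by blast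
    have ccW: "cc (V-S) y \<subseteq> W"
    proof
      fix w assume w: "w \<in> cc (V-S) y"
      have "w \<in> V - S" using cc_sub[OF yV] w by blast
      moreover have "w \<notin> C1"
      proof
        assume "w \<in> C1"
        then have "cc (V-S) w = C1" using cc_eq unfolding C1_def by blast
        moreover have "cc (V-S) w = cc (V-S) y" using cc_eq w by blast
        ultimately have "y \<in> C1" using cc_self[of y "V-S"] by simp
        then show False using y unfolding W_def by blast
      qed
      ultimately show "w \<in> W" unfolding W_def by blast
    qed
    have "(rad (cc (V-S) y))\<^sup>*\<^sup>* y z" using cc_within zt(1) by blast
    then have "(rad W)\<^sup>*\<^sup>* y z" using rad_mono[OF ccW] by blast
    moreover have "rad W z t" using zt ccW SW cc_sub[OF yV] unfolding rad_def by blast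
    ultimately have "(rad W)\<^sup>*\<^sup>* y t" by (simp add: rtranclp.rtrancl_into_rtrancl)
    then have "(rad W)\<^sup>*\<^sup>* t y" by (rule rad_sym)
    moreover have "(rad W)\<^sup>*\<^sup>* s0 t" using Sc zt(2) rad_mono[OF SW] by blast
    ultimately show ?thesis by (rule rtranclp_trans[rotated])
  qed
  have gSC1: "g ` S \<subseteq> C1" using gS unfolding C1_def .
  have gSV: "g ` S \<subseteq> V" using gSC1 C1V by blast
  have WgS: "W \<subseteq> V - g ` S" using gSC1 unfolding W_def by blast
  define D where "D = cc (V - g ` S) s0"
  have WD: "W \<subseteq> D"
  proof
    fix y assume "y \<in> W"
    then have "(rad W)\<^sup>*\<^sup>* s0 y" by (rule Wc)
    then have "(rad (V - g ` S))\<^sup>*\<^sup>* s0 y" using rad_mono[OF WgS] by blast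
    then show "y \<in> D" unfolding D_def cc_def by simp
  qed
  have gSf: "finite (g ` S)" using Sf by simp
  have C2W: "C2 \<subseteq> W" using C2V disj unfolding W_def by blast
  have lD: "lives rb D" using lives_mono[OF l2] C2W WD unfolding C2_def by blast
  have lgb: "lives (g \<circ> rb) (cc (V - g ` S) (g x2))" using aut_lives[OF g SV l2] .
  have gx2D: "g x2 \<in> D" using sim_comp[OF sim_sym[OF gb] gSf lD[unfolded D_def] lgb] unfolding D_def .
  have DgC2: "cc (V - g ` S) (g x2) = D" using cc_eq gx2D unfolding D_def by blast
  have gC1: "g ` C1 \<subseteq> C1"
  proof
    fix w assume "w \<in> g ` C1"
    then obtain y where y: "y \<in> C1" "w = g y" by blast
    have yV: "y \<in> V" using y C1V by blast
    show "w \<in> C1"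
    proof (rule ccontr)
      assume "w \<notin> C1"
      have "w \<in> V" using aut_in[OF g yV] y by simp
      then have "w \<in> W" using \<open>w \<notin> C1\<close> unfolding W_def by blast
      then have "g y \<in> cc (V - g ` S) (g x2)" using WD DgC2 y by blast
      then have "y \<in> cc (V - S) x2" using aut_cc_refl[OF g SV _ yV] x2 by blast
      then show False using y disj unfolding C2_def by blast
    qed
  qed
  define K where "K = V - C1 - C2"
  have Kf: "finite K"
  proof -
    have "K \<subseteq> (V - S - C1 - C2) \<union> S" unfolding K_def by blast
    moreover have "finite ((V - S - C1 - C2) \<union> S)" using cf(3) Sf unfolding C1_def C2_def by blast
    ultimately show ?thesis using finite_subset by blast
  qed
  define Z' where "Z' = C1 \<inter> g ` C2"
  have sub: "C1 - g ` C1 \<subseteq> g ` K \<union> Z'"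
  proof
    fix y assume y: "y \<in> C1 - g ` C1"
    have yV: "y \<in> V" using y C1V by blast
    define y' where "y' = inv_into V g y"
    have y'V: "y' \<in> V" unfolding y'_def using aut_in[OF aut_inv[OF g] yV] .
    have gy': "g y' = y" unfolding y'_def using aut_inv_r[OF g yV] .
    have "y' \<notin> C1" using y gy' by blast
    then have "y' \<in> K \<or> y' \<in> C2" using y'V unfolding K_def by blast
    then show "y \<in> g ` K \<union> Z'" using gy' y unfolding Z'_def by blast
  qed
  have Z'f: "finite Z'"
  proof -
    define T where "T = S \<union> g ` S"
    have Tf: "finite T" using Sf unfolding T_def by simp
    have TV: "T \<inter> V \<noteq> {}" using SV0 unfolding T_def by blast
    show ?thesis
    proof (rule fin_or_ray[OF Tf TV])
      show "Z' \<subseteq> V - T"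
      proof
        fix z assume z: "z \<in> Z'"
        then obtain w where w: "w \<in> C2" "z = g w" unfolding Z'_def by blast
        have "z \<in> V - S" using z C1V unfolding Z'_def by blast
        moreover have "z \<notin> g ` S"
        proof
          assume "z \<in> g ` S"
          then obtain s where s: "s \<in> S" "z = g s" by blast
          have "w \<in> V" using w C2V by blast
          moreover have "s \<in> V" using s SV by blast
          moreover have "g w = g s" using s w by simp
          ultimately have "w = s" using inj_onD[OF aut_inj[OF g]] by blast
          then show False using w s C2V by blast
        qed
        ultimately show "z \<in> V - T" unfolding T_def by blast
      qed
      show "\<forall>z\<in>Z'. cc (V-T) z \<subseteq> Z'"
      proof (intro ballI subsetI)
        fix z y assume z: "z \<in> Z'" and y: "y \<in> cc (V-T) z"
        have VT1: "V - T \<subseteq> V - S" and VT2: "V - T \<subseteq> V - g ` S" unfolding T_def by blast+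
        have "z \<in> C1" using z unfolding Z'_def by blast
        then have "cc (V-S) z = C1" using cc_eq unfolding C1_def by blast
        then have yC1: "y \<in> C1" using cc_mono[OF VT1] y by blast
        then have yV: "y \<in> V" using C1V by blast
        obtain w where w: "w \<in> C2" "z = g w" using z unfolding Z'_def by blast
        have wV: "w \<in> V" using w C2V by blast
        have yg: "y \<in> cc (V - g ` S) (g w)" using cc_mono[OF VT2] y w by blast
        define y'' where "y'' = inv_into V g y"
        have y''V: "y'' \<in> V" unfolding y''_def using aut_in[OF aut_inv[OF g] yV] .
        have gy'': "g y'' = y" unfolding y''_def using aut_inv_r[OF g yV] .
        have "y'' \<in> cc (V-S) w" using aut_cc_refl[OF g SV wV y''V] yg gy'' by simp
        moreover have "cc (V-S) w = C2" using cc_eq w unfolding C2_def by blast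
        ultimately have "y'' \<in> C2" by simp
        then show "y \<in> Z'" using gy'' yC1 unfolding Z'_def by blast
      qed
      show "\<forall>r. ray V adj r \<longrightarrow> \<not> range r \<subseteq> Z'"
      proof (intro allI impI notI)
        fix q assume q: "ray V adj q" and qZ: "range q \<subseteq> Z'"
        have lq1: "lives q (cc (V-S) x1)" using range_lives qZ unfolding Z'_def C1_def by blast
        have "g ` C2 \<subseteq> cc (V - g ` S) (g x2)" using aut_cc_diff[OF g SV] unfolding C2_def by blast
        then have lq2: "lives q (cc (V - g ` S) (g x2))" using range_lives qZ unfolding Z'_def by blast
        from dich q have "sim ra q \<or> sim rb q" by blast
        then show False
        proof
          assume s: "sim ra q"
          have lga: "lives (g \<circ> ra) (cc (V - g ` S) (g x1))" using aut_lives[OF g SV l1] .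
          have "sim (g \<circ> ra) q" using sim_trans[OF ga s] .
          then have "g x2 \<in> cc (V - g ` S) (g x1)" using sim_comp[OF _ gSf lga lq2] by blast
          then have "x2 \<in> cc (V-S) x1" using aut_cc_refl[OF g SV] x1 x2 by blast
          then show False using x2C1 unfolding C1_def by blast
        next
          assume s: "sim rb q"
          have "x1 \<in> cc (V-S) x2" using sim_comp[OF s Sf l2 lq1] .
          then show False using x1C1 disj unfolding C2_def by blast
        qed
      qed
    qed
  qed
  have finA: "finite (C1 - g ` C1)"
  proof -
    have "finite (g ` K \<union> Z')" using Kf Z'f by simp
    then show ?thesis using sub finite_subset by blast
  qed
  have sepA: "\<forall>u\<in>C1. \<forall>v. adj u v \<longrightarrow> v \<in> C1 \<union> S"
  proof (intro ballI allI impI)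
    fix u v assume u: "u \<in> C1" and uv: "adj u v"
    show "v \<in> C1 \<union> S"
    proof (cases "v \<in> S")
      case True then show ?thesis by simp
    next
      case False
      have "v \<in> V" using adj_V uv by blast
      then have "rad (V-S) u v" using u C1V uv False unfolding rad_def by blast
      then have "v \<in> C1" using cc_step u unfolding C1_def by blast
      then show ?thesis by simp
    qed
  qed
  have "C1 \<subseteq> V" "C1 \<inter> S = {}" using C1V by blast+
  then show ?thesis using sepA gC1 gSC1 finA by blast
qed

end

context G begin

lemma ball_fin: "finite {y. (adj ^^ n) x y}"
proof (induction n)
  case 0 then show ?case by simp
next
  case (Suc n)
  have "{y. (adj ^^ Suc n) x y} \<subseteq> (\<Union>z\<in>{y. (adj ^^ n) x y}. {y. adj z y})"
    by (auto elim: relpowp_Suc_E)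
  moreover have "finite (\<Union>z\<in>{y. (adj ^^ n) x y}. {y. adj z y})" using Suc nbr_fin by blast
  ultimately show ?case using finite_subset by blast
qed

lemma ballM_fin: "finite M \<Longrightarrow> finite {y. \<exists>m\<in>M. \<exists>n\<le>D. (adj ^^ n) m y}"
proof -
  assume M: "finite M"
  have "{y. \<exists>m\<in>M. \<exists>n\<le>D. (adj ^^ n) m y} = (\<Union>m\<in>M. \<Union>n\<in>{..D}. {y. (adj ^^ n) m y})" by auto
  moreover have "finite (\<Union>m\<in>M. \<Union>n\<in>{..D}. {y. (adj ^^ n) m y})" using M ball_fin by blast
  ultimately show ?thesis by simp
qed

lemma aut_pow: "automorphism V adj f \<Longrightarrow> (adj ^^ n) x y \<Longrightarrow> (adj ^^ n) (f x) (f y)"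
proof (induction n arbitrary: y)
  case 0 then show ?case by simp
next
  case (Suc n)
  from Suc.prems(2) obtain z where z: "(adj ^^ n) x z" "adj z y" by (auto elim: relpowp_Suc_E)
  have "(adj ^^ n) (f x) (f z)" using Suc.IH[OF Suc.prems(1) z(1)] .
  moreover have "adj (f z) (f y)" using aut_adj[OF Suc.prems(1) z(2)] .
  ultimately show ?case by (rule relpowp_Suc_I)
qed

lemma dist_bound:
  assumes "finite S" "S \<subseteq> V" "s0 \<in> V"
  shows "\<exists>D. \<forall>s\<in>S. (\<exists>n\<le>D. (adj ^^ n) s s0) \<and> (\<exists>n\<le>D. (adj ^^ n) s0 s)"
proof -
  have "\<forall>s\<in>S. \<exists>n. (adj ^^ fst n) s s0 \<and> (adj ^^ snd n) s0 s"
  proof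
    fix s assume "s \<in> S"
    then have sV: "s \<in> V" using assms by blast
    obtain a where "(adj ^^ a) s s0" using rtranclp_imp_relpowp[OF conn_V[OF sV assms(3)]] by blast
    moreover obtain b where "(adj ^^ b) s0 s" using rtranclp_imp_relpowp[OF conn_V[OF assms(3) sV]] by blast
    ultimately show "\<exists>n. (adj ^^ fst n) s s0 \<and> (adj ^^ snd n) s0 s" by (intro exI[of _ "(a,b)"]) simp
  qed
  from bchoice[OF this] obtain nf where nf: "\<forall>s\<in>S. (adj ^^ fst (nf s)) s s0 \<and> (adj ^^ snd (nf s)) s0 s" by blast
  have "finite ((\<lambda>s. fst (nf s) + snd (nf s)) ` S)" using assms(1) by simp
  then obtain D where D: "\<forall>k\<in>(\<lambda>s. fst (nf s) + snd (nf s)) ` S. k \<le> D"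
    using finite_nat_set_iff_bounded_le by blast
  have "\<forall>s\<in>S. (\<exists>n\<le>D. (adj ^^ n) s s0) \<and> (\<exists>n\<le>D. (adj ^^ n) s0 s)"
  proof
    fix s assume s: "s \<in> S"
    have "fst (nf s) + snd (nf s) \<le> D" using D s by blast
    then have "fst (nf s) \<le> D" "snd (nf s) \<le> D" by linarith+
    then show "(\<exists>n\<le>D. (adj ^^ n) s s0) \<and> (\<exists>n\<le>D. (adj ^^ n) s0 s)" using nf s by blast
  qed
  then show ?thesis by blast
qed

lemma aut_moves:
  assumes qt: "quasi_transitive V adj" and infV: "infinite V" and Sf: "finite S" and SV: "S \<subseteq> V"
    and s0: "s0 \<in> S" and Mf: "finite M"
  shows "\<exists>f. automorphism V adj f \<and> f ` S \<inter> M = {}"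
proof (rule ccontr)
  assume na: "\<not> ?thesis"
  have s0V: "s0 \<in> V" using s0 SV by blast
  obtain D where D: "\<forall>s\<in>S. (\<exists>n\<le>D. (adj ^^ n) s s0) \<and> (\<exists>n\<le>D. (adj ^^ n) s0 s)"
    using dist_bound[OF Sf SV s0V] by blast
  define Or where "Or = {f s0 | f. automorphism V adj f}"
  have OrB: "Or \<subseteq> {y. \<exists>m\<in>M. \<exists>n\<le>D. (adj ^^ n) m y}"
  proof
    fix y assume "y \<in> Or"
    then obtain f where f: "automorphism V adj f" "y = f s0" unfolding Or_def by blast
    have "f ` S \<inter> M \<noteq> {}" using na f(1) by blast
    then obtain s where s: "s \<in> S" "f s \<in> M" by blast
    obtain n where n: "n \<le> D" "(adj ^^ n) s s0" using D s(1) by blast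
    have "(adj ^^ n) (f s) (f s0)" using aut_pow[OF f(1) n(2)] .
    then show "y \<in> {y. \<exists>m\<in>M. \<exists>n\<le>D. (adj ^^ n) m y}" using s(2) n(1) f(2) by blast
  qed
  have Orf: "finite Or" using finite_subset[OF OrB ballM_fin[OF Mf]] .
  define orb where "orb v = {f v | f. automorphism V adj f}" for v
  have "orbits V {f. automorphism V adj f} = orb ` V" unfolding orbits_def orb_def by auto
  then have "finite (orb ` V)" using qt unfolding quasi_transitive_def by simp
  then obtain R where R: "R \<subseteq> V" "finite R" "orb ` V = orb ` R"
    using finite_subset_image[of "orb ` V" orb V] by blast
  obtain D' where D': "\<forall>s\<in>R. (\<exists>n\<le>D'. (adj ^^ n) s s0) \<and> (\<exists>n\<le>D'. (adj ^^ n) s0 s)"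
    using dist_bound[OF R(2) R(1) s0V] by blast
  have "V \<subseteq> {y. \<exists>m\<in>Or. \<exists>n\<le>D'. (adj ^^ n) m y}"
  proof
    fix v assume v: "v \<in> V"
    then have "orb v \<in> orb ` R" using R(3) by blast
    then obtain r where r: "r \<in> R" "orb v = orb r" by blast
    have "v \<in> orb v" unfolding orb_def using aut_id by (metis (mono_tags, lifting) id_apply mem_Collect_eq)
    then obtain f where f: "automorphism V adj f" "v = f r" using r(2) unfolding orb_def by blast
    obtain n where n: "n \<le> D'" "(adj ^^ n) s0 r" using D' r(1) by blast
    have "(adj ^^ n) (f s0) v" using aut_pow[OF f(1) n(2)] f(2) by simp
    moreover have "f s0 \<in> Or" unfolding Or_def using f(1) by blast
    ultimately show "v \<in> {y. \<exists>m\<in>Or. \<exists>n\<le>D'. (adj ^^ n) m y}" using n(1) by blast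
  qed
  then have "finite V" using finite_subset ballM_fin[OF Orf] by blast
  then show False using infV by simp
qed

lemma fix2:
  assumes g: "automorphism V adj g" and r: "ray V adj r1" "ray V adj r2" and ns: "\<not> sim r1 r2"
    and dich: "\<forall>q. ray V adj q \<longrightarrow> sim r1 q \<or> sim r2 q" and ga: "sim (g \<circ> r1) r1"
  shows "sim (g \<circ> r2) r2"
proof -
  have gr2: "ray V adj (g \<circ> r2)" using aut_ray[OF g r(2)] .
  then have "sim r1 (g \<circ> r2) \<or> sim r2 (g \<circ> r2)" using dich by blast
  then show ?thesis
  proof
    assume "sim r1 (g \<circ> r2)"
    then have "sim (g \<circ> r1) (g \<circ> r2)" using sim_trans[OF ga] by blast
    then have "sim r1 r2" using aut_sim_refl[OF g r] by blast
    then show ?thesis using ns by blast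
  next
    assume "sim r2 (g \<circ> r2)" then show ?thesis by (rule sim_sym)
  qed
qed

lemma swap:
  assumes g: "automorphism V adj g" and r: "ray V adj r1" "ray V adj r2" and ns: "\<not> sim r1 r2"
    and dich: "\<forall>q. ray V adj q \<longrightarrow> sim r1 q \<or> sim r2 q" and ga: "\<not> sim (g \<circ> r1) r1"
  shows "sim (g \<circ> r1) r2" "sim (g \<circ> r2) r1"
proof -
  have gr1: "ray V adj (g \<circ> r1)" using aut_ray[OF g r(1)] .
  then have "sim r1 (g \<circ> r1) \<or> sim r2 (g \<circ> r1)" using dich by blast
  then show s1: "sim (g \<circ> r1) r2" using ga sim_sym by blast
  have gr2: "ray V adj (g \<circ> r2)" using aut_ray[OF g r(2)] .
  then have "sim r1 (g \<circ> r2) \<or> sim r2 (g \<circ> r2)" using dich by blast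
  then show "sim (g \<circ> r2) r1"
  proof
    assume "sim r1 (g \<circ> r2)" then show ?thesis by (rule sim_sym)
  next
    assume "sim r2 (g \<circ> r2)"
    then have "sim (g \<circ> r1) (g \<circ> r2)" using sim_trans[OF s1] by blast
    then have "sim r1 r2" using aut_sim_refl[OF g r] by blast
    then show ?thesis using ns by blast
  qed
qed

lemma choose_g:
  assumes qt: "quasi_transitive V adj" and infV: "infinite V" and Sf: "finite S" and SV: "S \<subseteq> V"
    and s0: "s0 \<in> S" and Kf: "finite K"
    and r: "ray V adj r1" "ray V adj r2" and ns: "\<not> sim r1 r2"
    and dich: "\<forall>q. ray V adj q \<longrightarrow> sim r1 q \<or> sim r2 q"
  shows "\<exists>g. automorphism V adj g \<and> g ` S \<inter> K = {} \<and> sim (g \<circ> r1) r1 \<and> sim (g \<circ> r2) r2"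
proof -
  obtain f1 where f1: "automorphism V adj f1" "f1 ` S \<inter> K = {}" using aut_moves[OF qt infV Sf SV s0 Kf] by blast
  show ?thesis
  proof (cases "sim (f1 \<circ> r1) r1")
    case True
    then show ?thesis using f1 fix2[OF f1(1) r ns dich] by blast
  next
    case nf1: False
    define M where "M = K \<union> (f1 -` K \<inter> V)"
    have Mf: "finite M" unfolding M_def using Kf finite_vimage_IntI[OF Kf aut_inj[OF f1(1)]] by simp
    obtain f2 where f2: "automorphism V adj f2" "f2 ` S \<inter> M = {}" using aut_moves[OF qt infV Sf SV s0 Mf] by blast
    show ?thesis
    proof (cases "sim (f2 \<circ> r1) r1")
      case True
      moreover have "f2 ` S \<inter> K = {}" using f2(2) unfolding M_def by blast
      ultimately show ?thesis using f2 fix2[OF f2(1) r ns dich] by blast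
    next
      case nf2: False
      define g where "g = f1 \<circ> f2"
      have g: "automorphism V adj g" unfolding g_def using aut_comp[OF f1(1) f2(1)] .
      have "g ` S \<inter> K = {}"
      proof (rule ccontr)
        assume "g ` S \<inter> K \<noteq> {}"
        then obtain s where s: "s \<in> S" "f1 (f2 s) \<in> K" unfolding g_def by auto
        have "f2 s \<in> V" using aut_in[OF f2(1)] s(1) SV by blast
        then have "f2 s \<in> M" using s(2) unfolding M_def by blast
        then show False using f2(2) s(1) by blast
      qed
      moreover have "sim (g \<circ> r1) r1"
      proof -
        have a: "sim (f2 \<circ> r1) r2" using swap[OF f2(1) r ns dich nf2] by blast
        have b: "sim (f1 \<circ> r2) r1" using swap[OF f1(1) r ns dich nf1] by blast
        have "sim (f1 \<circ> (f2 \<circ> r1)) (f1 \<circ> r2)" using aut_sim[OF f1(1) a] .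
        then have "sim (f1 \<circ> (f2 \<circ> r1)) r1" using sim_trans b by blast
        then show ?thesis unfolding g_def by (simp add: o_assoc)
      qed
      ultimately show ?thesis using g fix2[OF g r ns dich] by blast
    qed
  qed
qed

lemma exists_translation:
  assumes qt: "quasi_transitive V adj" and e2: "card (ends V adj) = 2"
  shows "\<exists>g A S. automorphism V adj g \<and> A \<subseteq> V \<and> finite S \<and> S \<subseteq> V \<and> S \<noteq> {} \<and> A \<inter> S = {} \<and>
    (\<forall>u\<in>A. \<forall>v. adj u v \<longrightarrow> v \<in> A \<union> S) \<and> g ` A \<subseteq> A \<and> g ` S \<subseteq> A \<and> finite (A - g ` A)"
proof -
  obtain r1 r2 where r: "ray V adj r1" "ray V adj r2" and ns: "\<not> sim r1 r2"
    and dich: "\<forall>q. ray V adj q \<longrightarrow> sim r1 q \<or> sim r2 q" using two_ends[OF e2] by blast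
  obtain T0 where T0: "finite T0" "\<not> (\<exists>a. lives r1 (cc (V - T0) a) \<and> lives r2 (cc (V - T0) a))"
    using ns unfolding sim_def by blast
  have v0: "r1 0 \<in> V" using r(1) unfolding ray_def by auto
  obtain S where S: "finite S" "S \<subseteq> V" "r1 0 \<in> S" "T0 \<inter> V \<subseteq> S" "\<forall>s\<in>S. (rad S)\<^sup>*\<^sup>* (r1 0) s"
    using conn_sep[OF T0(1) v0] by blast
  have sep: "\<not> (\<exists>a. lives r1 (cc (V - S) a) \<and> lives r2 (cc (V - S) a))"
  proof
    assume "\<exists>a. lives r1 (cc (V - S) a) \<and> lives r2 (cc (V - S) a)"
    then obtain a where a: "lives r1 (cc (V - S) a)" "lives r2 (cc (V - S) a)" by blast
    have "V - S \<subseteq> V - T0" using S(4) by blast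
    then have "cc (V - S) a \<subseteq> cc (V - T0) a" by (rule cc_mono)
    then have "lives r1 (cc (V - T0) a) \<and> lives r2 (cc (V - T0) a)" using a lives_mono by blast
    then show False using T0(2) by blast
  qed
  have infV: "infinite V"
  proof -
    have "inj r1" "range r1 \<subseteq> V" using r(1) unfolding ray_def by auto
    then show ?thesis using infinite_iff_countable_subset by blast
  qed
  obtain N1 where N1: "r1 N1 \<in> V - S" "\<forall>n\<ge>N1. r1 n \<in> cc (V-S) (r1 N1)" using ray_lives[OF r(1) S(1)] by blast
  obtain N2 where N2: "r2 N2 \<in> V - S" "\<forall>n\<ge>N2. r2 n \<in> cc (V-S) (r2 N2)" using ray_lives[OF r(2) S(1)] by blast
  define x1 where "x1 = r1 N1"
  define x2 where "x2 = r2 N2"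
  have x1: "x1 \<in> V - S" and x2: "x2 \<in> V - S" using N1 N2 unfolding x1_def x2_def by auto
  have l1: "lives r1 (cc (V-S) x1)" using N1 unfolding lives_def x1_def by blast
  have l2: "lives r2 (cc (V-S) x2)" using N2 unfolding lives_def x2_def by blast
  note cf = comps_fin[OF S(1) S(2) S(3) r dich x1 x2 l1 l2 sep]
  define K where "K = V - cc (V-S) x1 - cc (V-S) x2"
  have Kf: "finite K"
  proof -
    have "K \<subseteq> (V - S - cc (V-S) x1 - cc (V-S) x2) \<union> S" unfolding K_def by blast
    moreover have "finite ((V - S - cc (V-S) x1 - cc (V-S) x2) \<union> S)" using cf(3) S(1) by blast
    ultimately show ?thesis using finite_subset by blast
  qed
  obtain g where g: "automorphism V adj g" "g ` S \<inter> K = {}" "sim (g \<circ> r1) r1" "sim (g \<circ> r2) r2"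
    using choose_g[OF qt infV S(1) S(2) S(3) Kf r ns dich] by blast
  have C12: "cc (V-S) x1 \<union> cc (V-S) x2 \<subseteq> V - S" using cc_sub x1 x2 by blast
  have gSC: "g ` S \<subseteq> cc (V-S) x1 \<union> cc (V-S) x2"
  proof
    fix y assume "y \<in> g ` S"
    moreover then have "y \<in> V" using aut_in[OF g(1)] S(2) by blast
    ultimately show "y \<in> cc (V-S) x1 \<union> cc (V-S) x2" using g(2) unfolding K_def by blast
  qed
  have gSc: "g s \<in> cc (V-S) (g (r1 0))" if s: "s \<in> S" for s
  proof -
    have "(rad S)\<^sup>*\<^sup>* (r1 0) s" using S(5) s by blast
    then have "(rad (g ` S))\<^sup>*\<^sup>* (g (r1 0)) (g s)" using aut_rad[OF g(1)] by blast
    moreover have "g ` S \<subseteq> V - S" using gSC C12 by blast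
    ultimately have "(rad (V - S))\<^sup>*\<^sup>* (g (r1 0)) (g s)" using rad_mono by blast
    then show ?thesis unfolding cc_def by simp
  qed
  have gs0: "g (r1 0) \<in> cc (V-S) x1 \<union> cc (V-S) x2" using gSC S(3) by blast
  then consider "g (r1 0) \<in> cc (V-S) x1" | "g (r1 0) \<in> cc (V-S) x2" by blast
  then have "\<exists>A. A \<subseteq> V \<and> A \<inter> S = {} \<and> (\<forall>u\<in>A. \<forall>v. adj u v \<longrightarrow> v \<in> A \<union> S) \<and> g ` A \<subseteq> A \<and> g ` S \<subseteq> A \<and> finite (A - g ` A)"
  proof cases
    case 1
    then have "cc (V-S) (g (r1 0)) = cc (V-S) x1" by (rule cc_eq)
    then have "g ` S \<subseteq> cc (V-S) x1" using gSc by blast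
    then show ?thesis using core[OF S(1) S(2) S(3) S(5) r dich x1 x2 l1 l2 sep g(1) g(3) g(4)] by blast
  next
    case 2
    then have "cc (V-S) (g (r1 0)) = cc (V-S) x2" by (rule cc_eq)
    then have gS2: "g ` S \<subseteq> cc (V-S) x2" using gSc by blast
    have dich': "\<forall>q. ray V adj q \<longrightarrow> sim r2 q \<or> sim r1 q" using dich by blast
    have sep': "\<not> (\<exists>a. lives r2 (cc (V - S) a) \<and> lives r1 (cc (V - S) a))" using sep by blast
    show ?thesis using core[OF S(1) S(2) S(3) S(5) r(2) r(1) dich' x2 x1 l2 l1 sep' g(1) g(4) g(3) gS2] by blast
  qed
  then obtain A where A0: "A \<subseteq> V \<and> A \<inter> S = {} \<and> (\<forall>u\<in>A. \<forall>v. adj u v \<longrightarrow> v \<in> A \<union> S) \<and>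
    g ` A \<subseteq> A \<and> g ` S \<subseteq> A \<and> finite (A - g ` A)" by (rule exE)
  note A = A0[THEN conjunct1] A0[THEN conjunct2, THEN conjunct1] A0[THEN conjunct2, THEN conjunct2, THEN conjunct1]
    A0[THEN conjunct2, THEN conjunct2, THEN conjunct2, THEN conjunct1]
    A0[THEN conjunct2, THEN conjunct2, THEN conjunct2, THEN conjunct2, THEN conjunct1]
    A0[THEN conjunct2, THEN conjunct2, THEN conjunct2, THEN conjunct2, THEN conjunct2]
  have Sne: "S \<noteq> {}" using S(3) by blast
  show ?thesis
    by (rule exI[of _ g], rule exI[of _ A], rule exI[of _ S]) (intro conjI g(1) A S(1) S(2) Sne)
qed

end

context G begin

lemma aut_funpow: "automorphism V adj f \<Longrightarrow> automorphism V adj (f ^^ k)"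
proof (induction k)
  case 0 then show ?case using aut_id by (simp add: id_def)
next
  case (Suc k)
  have "automorphism V adj (f \<circ> f ^^ k)" using aut_comp[OF Suc.prems Suc.IH[OF Suc.prems]] .
  then show ?case by (subst funpow.simps(2))
qed

lemma discrete_ivt:
  fixes P :: "int \<Rightarrow> bool"
  assumes "P n0" "\<not> P m" "n0 \<le> m"
  shows "\<exists>k. P k \<and> \<not> P (k + 1)"
  using assms(3,2)
proof (induction m rule: int_ge_induct)
  case base then show ?case using assms(1) by simp
next
  case (step i)
  show ?case
  proof (cases "P i")
    case True then show ?thesis using step.prems by blast
  next
    case False then show ?thesis using step.IH by blast
  qed
qed

lemma levels:
  assumes g: "automorphism V adj g" and AV: "A \<subseteq> V" and Sf: "finite S" and SV: "S \<subseteq> V"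
    and Sne: "S \<noteq> {}" and AS: "A \<inter> S = {}" and sepA: "\<forall>u\<in>A. \<forall>v. adj u v \<longrightarrow> v \<in> A \<union> S"
    and gA: "g ` A \<subseteq> A" and gS: "g ` S \<subseteq> A" and finA: "finite (A - g ` A)"
  shows "\<exists>(gp :: int \<Rightarrow> 'a \<Rightarrow> 'a) (lev :: 'a \<Rightarrow> int). (\<forall>n. automorphism V adj (gp n)) \<and> (\<forall>m n x. x \<in> V \<longrightarrow> gp (m+n) x = gp m (gp n x))
    \<and> (\<forall>x\<in>V. gp 0 x = x) \<and> (\<forall>k x. x \<in> V \<longrightarrow> lev (gp k x) = lev x + k)
    \<and> (\<forall>a b. finite {v\<in>V. a \<le> lev v \<and> lev v \<le> b}) \<and> (\<forall>u v. adj u v \<longrightarrow> lev v \<le> lev u + 1)"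
proof -
  define h where "h = inv_into V g"
  have h: "automorphism V adj h" unfolding h_def using aut_inv[OF g] .
  have hg: "x \<in> V \<Longrightarrow> h (g x) = x" for x unfolding h_def using aut_inv_l[OF g] .
  have gh: "x \<in> V \<Longrightarrow> g (h x) = x" for x unfolding h_def using aut_inv_r[OF g] .
  define gp :: "int \<Rightarrow> 'a \<Rightarrow> 'a" where "gp n = (if n \<ge> 0 then g ^^ nat n else h ^^ nat (- n))" for n
  have gpa: "automorphism V adj (gp n)" for n unfolding gp_def using aut_funpow g h by simp
  have gpV: "x \<in> V \<Longrightarrow> gp n x \<in> V" for n x using aut_in[OF gpa] .
  have gp0: "gp 0 x = x" for x unfolding gp_def by simp
  have gp1: "gp 1 = g" unfolding gp_def by simp
  have gpS: "gp (n + 1) x = g (gp n x)" if x: "x \<in> V" for n x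
  proof (cases "n \<ge> 0")
    case True
    then have "nat (n + 1) = Suc (nat n)" by simp
    then show ?thesis unfolding gp_def using True by simp
  next
    case False
    show ?thesis
    proof (cases "n = -1")
      case True
      have "gp n x = h x" unfolding gp_def using True by simp
      then show ?thesis using True gh[OF x] gp0 by simp
    next
      case False2: False
      then have n2: "n + 1 < 0" using False by simp
      have "nat (- n) = Suc (nat (- (n + 1)))" using n2 by simp
      then have "gp n x = h (gp (n + 1) x)" unfolding gp_def using n2 False by simp
      moreover have "gp (n + 1) x \<in> V" using gpV x by blast
      ultimately show ?thesis using gh by simp
    qed
  qed
  have gpP: "gp (n - 1) x = h (gp n x)" if x: "x \<in> V" for n x
  proof -
    have "gp n x = g (gp (n - 1) x)" using gpS[OF x, of "n - 1"] by simp
    then show ?thesis using hg gpV x by simp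
  qed
  have gpadd: "gp (m + n) x = gp m (gp n x)" if x: "x \<in> V" for m n x
  proof (induction m rule: int_induct[where k = 0])
    case base then show ?case using gp0 by simp
  next
    case (step1 i)
    have "gp (i + 1 + n) x = gp ((i + n) + 1) x" by (simp add: algebra_simps)
    also have "\<dots> = g (gp (i + n) x)" using gpS x by blast
    also have "\<dots> = g (gp i (gp n x))" using step1.IH by simp
    also have "\<dots> = gp (i + 1) (gp n x)" using gpS gpV x by simp
    finally show ?case .
  next
    case (step2 i)
    have "gp (i - 1 + n) x = gp ((i + n) - 1) x" by (simp add: algebra_simps)
    also have "\<dots> = h (gp (i + n) x)" using gpP x by blast
    also have "\<dots> = h (gp i (gp n x))" using step2.IH by simp
    also have "\<dots> = gp (i - 1) (gp n x)" using gpP gpV x by simp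
    finally show ?case .
  qed
  have gpinj: "inj_on (gp n) V" for n using aut_inj[OF gpa] .
  have gpimgadd: "gp (m + n) ` X = gp m ` (gp n ` X)" if XV: "X \<subseteq> V" for m n X
  proof -
    have "gp m ` (gp n ` X) = (\<lambda>x. gp m (gp n x)) ` X" by (simp add: image_image)
    also have "\<dots> = gp (m + n) ` X" using gpadd XV by (intro image_cong) auto
    finally show ?thesis by simp
  qed
  define Ai where "Ai n = gp n ` A" for n
  have AiV: "Ai n \<subseteq> V" for n unfolding Ai_def using gpV AV by blast
  have Amono1: "Ai (n + 1) \<subseteq> Ai n" for n
  proof -
    have "Ai (n + 1) = gp n ` (gp 1 ` A)" unfolding Ai_def using gpimgadd[OF AV] by simp
    also have "\<dots> \<subseteq> gp n ` A" using gA gp1 by (simp add: image_mono)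
    finally show ?thesis unfolding Ai_def .
  qed
  have Amono: "Ai m \<subseteq> Ai n" if "n \<le> m" for m n
    using that
  proof (induction m rule: int_ge_induct)
    case base then show ?case by simp
  next
    case (step i) then show ?case using Amono1[of i] by blast
  qed
  have SA1: "gp (n + 1) ` S \<subseteq> Ai n" for n
  proof -
    have "gp (n + 1) ` S = gp n ` (gp 1 ` S)" using gpimgadd[OF SV] by simp
    also have "\<dots> \<subseteq> gp n ` A" using gS gp1 by (simp add: image_mono)
    finally show ?thesis unfolding Ai_def .
  qed
  have sepn: "v \<in> Ai n \<union> gp n ` S" if u: "u \<in> Ai n" and uv: "adj u v" for u v n
  proof -
    obtain a where a: "a \<in> A" "u = gp n a" using u unfolding Ai_def by blast
    have vV: "v \<in> V" using adj_V uv by blast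
    have aV: "a \<in> V" using a AV by blast
    define v' where "v' = gp (- n) v"
    have v'V: "v' \<in> V" unfolding v'_def using gpV vV by blast
    have vv': "v = gp n v'" unfolding v'_def using gpadd[OF vV, of n "- n"] gp0 by simp
    have "gp (- n) u = a" using a gpadd[OF aV, of "- n" n] gp0 by simp
    then have "adj a v'" using aut_adj[OF gpa uv, of "- n"] unfolding v'_def by simp
    then have "v' \<in> A \<union> S" using sepA a by blast
    then show ?thesis using vv' unfolding Ai_def by blast
  qed
  have adjdown: "v \<in> Ai (n - 1)" if u: "u \<in> Ai n" and uv: "adj u v" for u v n
  proof -
    have "v \<in> Ai n \<union> gp n ` S" using sepn u uv by blast
    moreover have "Ai n \<subseteq> Ai (n - 1)" using Amono by simp
    moreover have "gp n ` S \<subseteq> Ai (n - 1)" using SA1[of "n - 1"] by simp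
    ultimately show ?thesis by blast
  qed
  obtain s0 where s0: "s0 \<in> S" using Sne by blast
  have s0V: "s0 \<in> V" using s0 SV by blast
  have s0A: "s0 \<notin> Ai 0" unfolding Ai_def using gp0 AS s0 by auto
  have gs0A: "g s0 \<in> Ai 0" unfolding Ai_def using gp0 gS s0 by auto
  have Ea: "\<exists>n. y \<notin> Ai n" if "adj\<^sup>*\<^sup>* s0 y" for y
    using that
  proof (induction rule: rtranclp_induct)
    case base then show ?case using s0A by blast
  next
    case (step y z)
    then obtain n where n: "y \<notin> Ai n" by blast
    have "z \<notin> Ai (n + 1)"
    proof
      assume "z \<in> Ai (n + 1)"
      then have "y \<in> Ai n" using adjdown[of z "n + 1" y] adj_sym[OF step.hyps(2)] by simp
      then show False using n by blast
    qed
    then show ?case by blast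
  qed
  have Eb: "\<exists>n. y \<in> Ai n" if "adj\<^sup>*\<^sup>* (g s0) y" for y
    using that
  proof (induction rule: rtranclp_induct)
    case base then show ?case using gs0A by blast
  next
    case (step y z)
    then obtain n where n: "y \<in> Ai n" by blast
    then have "z \<in> Ai (n - 1)" using adjdown step.hyps(2) by blast
    then show ?case by blast
  qed
  have gs0V: "g s0 \<in> V" using aut_in[OF g s0V] .
  have exlev: "\<exists>n. v \<in> Ai n \<and> v \<notin> Ai (n + 1)" if v: "v \<in> V" for v
  proof -
    obtain m where m: "v \<notin> Ai m" using Ea conn_V[OF s0V v] by blast
    obtain n0 where n0: "v \<in> Ai n0" using Eb conn_V[OF gs0V v] by blast
    have "n0 \<le> m"
    proof (rule ccontr)
      assume "\<not> n0 \<le> m"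
      then have "Ai n0 \<subseteq> Ai m" using Amono by simp
      then show False using m n0 by blast
    qed
    then show ?thesis using discrete_ivt[of "\<lambda>k. v \<in> Ai k" n0 m] n0 m by blast
  qed
  have unlev: "j = k" if "v \<in> Ai j" "v \<notin> Ai (j + 1)" "v \<in> Ai k" "v \<notin> Ai (k + 1)" for v j k
  proof (rule ccontr)
    assume "j \<noteq> k"
    then consider "j + 1 \<le> k" | "k + 1 \<le> j" by linarith
    then show False
    proof cases
      case 1 then show False using Amono[OF 1] that by blast
    next
      case 2 then show False using Amono[OF 2] that by blast
    qed
  qed
  define lev where "lev v = (THE n. v \<in> Ai n \<and> v \<notin> Ai (n + 1))" for v
  have levc: "lev v = n \<longleftrightarrow> v \<in> Ai n \<and> v \<notin> Ai (n + 1)" if v: "v \<in> V" for v n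
  proof -
    obtain k where k: "v \<in> Ai k \<and> v \<notin> Ai (k + 1)" using exlev[OF v] by blast
    have "lev v = k" unfolding lev_def using k unlev by blast
    then show ?thesis using k unlev by blast
  qed
  have levge: "j \<le> lev v" if v: "v \<in> V" and vj: "v \<in> Ai j" for v j
  proof (rule ccontr)
    assume "\<not> j \<le> lev v"
    then have "Ai j \<subseteq> Ai (lev v + 1)" using Amono by simp
    then show False using levc[OF v] vj by blast
  qed
  have lev_shift: "lev (gp k x) = lev x + k" if x: "x \<in> V" for k x
  proof -
    let ?n = "lev x"
    have c: "x \<in> Ai ?n \<and> x \<notin> Ai (?n + 1)" using levc[OF x] by blast
    have img: "gp k ` Ai j = Ai (k + j)" for j unfolding Ai_def using gpimgadd[OF AV] by simp
    have "gp k x \<in> Ai (k + ?n)" using c img by blast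
    moreover have "gp k x \<notin> Ai (k + (?n + 1))"
    proof
      assume "gp k x \<in> Ai (k + (?n + 1))"
      then have "gp k x \<in> gp k ` Ai (?n + 1)" using img by simp
      then have "x \<in> Ai (?n + 1)" using inj_on_image_mem_iff[OF gpinj x AiV] by blast
      then show False using c by blast
    qed
    ultimately have "gp k x \<in> Ai (?n + k) \<and> gp k x \<notin> Ai (?n + k + 1)" by (simp add: algebra_simps)
    then show ?thesis using levc gpV x by blast
  qed
  have band: "finite {v\<in>V. a \<le> lev v \<and> lev v \<le> b}" for a b
  proof -
    have "{v\<in>V. a \<le> lev v \<and> lev v \<le> b} \<subseteq> (\<Union>n\<in>{a..b}. gp n ` (A - g ` A))"
    proof
      fix v assume v: "v \<in> {v\<in>V. a \<le> lev v \<and> lev v \<le> b}"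
      let ?n = "lev v"
      have c: "v \<in> Ai ?n \<and> v \<notin> Ai (?n + 1)" using levc v by blast
      then obtain y where y: "y \<in> A" "v = gp ?n y" unfolding Ai_def by blast
      have "y \<notin> g ` A"
      proof
        assume "y \<in> g ` A"
        then have "v \<in> gp ?n ` (gp 1 ` A)" using y gp1 by simp
        then have "v \<in> Ai (?n + 1)" unfolding Ai_def using gpimgadd[OF AV, of ?n 1] by simp
        then show False using c by blast
      qed
      then show "v \<in> (\<Union>n\<in>{a..b}. gp n ` (A - g ` A))" using v y by auto
    qed
    moreover have "finite (\<Union>n\<in>{a..b}. gp n ` (A - g ` A))" using finA by simp
    ultimately show ?thesis using finite_subset by blast
  qed
  have ladj: "lev v \<le> lev u + 1" if uv: "adj u v" for u v
  proof -
    have uV: "u \<in> V" and vV: "v \<in> V" using adj_V uv by auto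
    have "v \<in> Ai (lev v)" using levc vV by blast
    then have "u \<in> Ai (lev v - 1)" using adjdown adj_sym[OF uv] by blast
    then show ?thesis using levge uV by fastforce
  qed
  show ?thesis
    apply (rule exI[of _ gp], rule exI[of _ lev])
    using gpa gpadd gp0 lev_shift band ladj by blast
qed

end

context G begin

lemma edge_form: "e \<in> edges V adj \<Longrightarrow> \<exists>u v. e = {u, v} \<and> adj u v"
  unfolding edges_def by blast

lemma edge_V: "e \<in> edges V adj \<Longrightarrow> e \<subseteq> V"
  unfolding edges_def by blast

lemma aut_edge: assumes f: "automorphism V adj f" and e: "e \<in> edges V adj" shows "f ` e \<in> edges V adj"
proof -
  obtain u v where uv: "e = {u, v}" "adj u v" using edge_form[OF e] by blast
  have "adj (f u) (f v)" using aut_adj[OF f uv(2)] .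
  moreover have "f ` e = {f u, f v}" using uv by simp
  ultimately show ?thesis unfolding edges_def using adj_V by blast
qed

lemma coloring:
  fixes gp :: "int \<Rightarrow> 'a \<Rightarrow> 'a" and lev :: "'a \<Rightarrow> int"
  assumes gpa: "\<forall>n. automorphism V adj (gp n)" and gpadd: "\<forall>m n x. x \<in> V \<longrightarrow> gp (m+n) x = gp m (gp n x)"
    and gp0: "\<forall>x\<in>V. gp 0 x = x" and shift: "\<forall>k x. x \<in> V \<longrightarrow> lev (gp k x) = lev x + k"
    and band: "\<forall>a b. finite {v\<in>V. a \<le> lev v \<and> lev v \<le> b}" and ladj: "\<forall>u v. adj u v \<longrightarrow> lev v \<le> lev u + 1"
  shows "\<exists>c. proper_edge_coloring V adj c \<and> periodic_coloring V adj c \<and> c ` edges V adj \<subseteq> {..<chromatic_index V adj}"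
proof -
  define E where "E = edges V adj"
  have gpE: "gp k ` e \<in> E" if "e \<in> E" for k e using aut_edge gpa that unfolding E_def by blast
  have eV: "e \<subseteq> V" if "e \<in> E" for e using edge_V that unfolding E_def by blast
  have gpV: "gp k x \<in> V" if "x \<in> V" for k x using aut_in gpa that by blast
  have gpimg: "gp m ` (gp n ` e) = gp (m + n) ` e" if "e \<subseteq> V" for m n e
  proof -
    have "gp m ` (gp n ` e) = (\<lambda>x. gp m (gp n x)) ` e" by (simp add: image_image)
    also have "\<dots> = gp (m + n) ` e" using gpadd that by (intro image_cong) auto
    finally show ?thesis .
  qed
  have gpimg0: "gp 0 ` e = e" if "e \<subseteq> V" for e
  proof -
    have "gp 0 ` e = id ` e" using gp0 that by (intro image_cong) auto
    then show ?thesis by simp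
  qed
  have gpinjE: "e = e'" if "e \<subseteq> V" "e' \<subseteq> V" "gp k ` e = gp k ` e'" for e e' k
    using inj_on_image_eq_iff[OF aut_inj[OF gpa[rule_format, of k]] that(1,2)] that(3) by simp
  have ladj2: "lev u \<le> lev v + 1 \<and> lev v \<le> lev u + 1" if "adj u v" for u v
    using ladj adj_sym that by blast
  define mlev where "mlev e = Min (lev ` e)" for e
  have mpair: "mlev {u, v} = min (lev u) (lev v)" for u v unfolding mlev_def by simp
  have m2: "mlev e \<le> lev x \<and> lev x \<le> mlev e + 1" if e: "e \<in> E" and x: "x \<in> e" for e x
  proof -
    obtain u v where uv: "e = {u, v}" "adj u v" using edge_form e unfolding E_def by blast
    have "lev u \<le> lev v + 1 \<and> lev v \<le> lev u + 1" using ladj2[OF uv(2)] .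
    then show ?thesis using x uv(1) mpair by auto
  qed
  have m1: "mlev (gp k ` e) = mlev e + k" if e: "e \<in> E" for e k
  proof -
    obtain u v where uv: "e = {u, v}" "adj u v" using edge_form e unfolding E_def by blast
    have uV: "u \<in> V" and vV: "v \<in> V" using adj_V uv(2) by auto
    have "gp k ` e = {gp k u, gp k v}" using uv by simp
    then have "mlev (gp k ` e) = min (lev u + k) (lev v + k)" using mpair shift uV vV by simp
    then show ?thesis using uv(1) mpair by simp
  qed
  have m3: "mlev e' \<le> mlev e + 1 \<and> mlev e \<le> mlev e' + 1" if ee: "e \<in> E" "e' \<in> E" "e \<inter> e' \<noteq> {}" for e e'
  proof -
    obtain w where "w \<in> e" "w \<in> e'" using ee(3) by blast
    then show ?thesis using m2[OF ee(1)] m2[OF ee(2)] by fastforce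
  qed
  have ex_col: "\<exists>k c. proper_edge_coloring V adj c \<and> c ` E \<subseteq> {..<k}"
  proof -
    define E0 where "E0 = {e\<in>E. mlev e = 0}"
    have "E0 \<subseteq> Pow {v\<in>V. 0 \<le> lev v \<and> lev v \<le> 1}"
    proof
      fix e assume "e \<in> E0"
      then have e: "e \<in> E" "mlev e = 0" unfolding E0_def by auto
      show "e \<in> Pow {v\<in>V. 0 \<le> lev v \<and> lev v \<le> 1}" using m2[OF e(1)] e(2) eV[OF e(1)] by auto
    qed
    moreover have "finite (Pow {v\<in>V. 0 \<le> lev v \<and> lev v \<le> 1})" using band by simp
    ultimately have E0f: "finite E0" using finite_subset by blast
    obtain idx :: "'a set \<Rightarrow> nat" and n where idx: "idx ` E0 = {i. i < n}" "inj_on idx E0"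
      using finite_imp_inj_to_nat_seg[OF E0f] by blast
    define c1 where "c1 e = idx (gp (- mlev e) ` e) * 3 + nat (mlev e mod 3)" for e
    have E0mem: "gp (- mlev e) ` e \<in> E0" if "e \<in> E" for e
      using m1[OF that] gpE[OF that] unfolding E0_def by simp
    have "proper_edge_coloring V adj c1"
      unfolding proper_edge_coloring_def E_def[symmetric]
    proof (intro ballI impI notI)
      fix e e' assume e: "e \<in> E" and e': "e' \<in> E" and ne: "e \<noteq> e' \<and> e \<inter> e' \<noteq> {}" and eq: "c1 e = c1 e'"
      have r1: "nat (mlev e mod 3) < 3" "nat (mlev e' mod 3) < 3" by auto
      have "c1 e mod 3 = nat (mlev e mod 3)" "c1 e' mod 3 = nat (mlev e' mod 3)" unfolding c1_def using r1 by auto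
      then have "nat (mlev e mod 3) = nat (mlev e' mod 3)" using eq by simp
      then have md: "mlev e mod 3 = mlev e' mod 3" by simp
      have "mlev e' \<le> mlev e + 1 \<and> mlev e \<le> mlev e' + 1" using m3[OF e e'] ne by blast
      then have meq: "mlev e = mlev e'" using md by presburger
      have "c1 e div 3 = idx (gp (- mlev e) ` e)" "c1 e' div 3 = idx (gp (- mlev e') ` e')" unfolding c1_def using r1 by auto
      then have "idx (gp (- mlev e) ` e) = idx (gp (- mlev e) ` e')" using eq meq by simp
      then have "gp (- mlev e) ` e = gp (- mlev e) ` e'" using inj_onD[OF idx(2)] E0mem[OF e] E0mem[OF e'] meq by simp
      then have "e = e'" using gpinjE eV[OF e] eV[OF e'] by blast
      then show False using ne by blast
    qed
    moreover have "c1 ` E \<subseteq> {..<3 * n + 3}"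
    proof
      fix y assume "y \<in> c1 ` E"
      then obtain e where e: "e \<in> E" "y = c1 e" by blast
      have "idx (gp (- mlev e) ` e) < n" using E0mem[OF e(1)] idx(1) by blast
      moreover have "nat (mlev e mod 3) < 3" by auto
      ultimately show "y \<in> {..<3 * n + 3}" unfolding e(2) c1_def by simp
    qed
    ultimately show ?thesis by blast
  qed
  define \<chi> where "\<chi> = chromatic_index V adj"
  have "\<exists>c. proper_edge_coloring V adj c \<and> c ` E \<subseteq> {..<\<chi>}"
  proof -
    let ?P = "\<lambda>k. \<exists>c. proper_edge_coloring V adj c \<and> c ` edges V adj \<subseteq> {..<k}"
    have "\<exists>k. ?P k" using ex_col unfolding E_def by blast
    then have "?P (LEAST k. ?P k)" by (rule LeastI_ex)
    then show ?thesis unfolding \<chi>_def chromatic_index_def E_def .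
  qed
  then obtain c0 where c0: "proper_edge_coloring V adj c0" "c0 ` E \<subseteq> {..<\<chi>}" by blast
  have c0p: "c0 e \<noteq> c0 e'" if "e \<in> E" "e' \<in> E" "e \<noteq> e'" "e \<inter> e' \<noteq> {}" for e e'
    using c0(1) that unfolding proper_edge_coloring_def E_def by blast
  define W where "W = {e\<in>E. \<forall>x\<in>e. 0 \<le> lev x \<and> lev x \<le> 4}"
  have "W \<subseteq> Pow {v\<in>V. 0 \<le> lev v \<and> lev v \<le> 4}" unfolding W_def using eV by blast
  moreover have "finite (Pow {v\<in>V. 0 \<le> lev v \<and> lev v \<le> 4})" using band by simp
  ultimately have Wf: "finite W" using finite_subset by blast
  define pat where "pat j = restrict (\<lambda>e. c0 (gp (2 * int j) ` e)) W" for j :: nat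
  have patin: "pat j \<in> W \<rightarrow>\<^sub>E {..<\<chi>}" for j
    unfolding pat_def restrict_PiE_iff using c0(2) gpE unfolding W_def by blast
  have "\<not> inj pat"
  proof
    assume "inj pat"
    then have "infinite (range pat)" using infinite_iff_countable_subset by blast
    moreover have "range pat \<subseteq> W \<rightarrow>\<^sub>E {..<\<chi>}" using patin by blast
    moreover have "finite (W \<rightarrow>\<^sub>E {..<\<chi>})" by (rule finite_PiE[OF Wf]) simp
    ultimately show False using finite_subset by blast
  qed
  then obtain i0 j0 where ij0: "i0 \<noteq> j0" "pat i0 = pat j0" unfolding inj_def by blast
  obtain i j where ij: "i < j" "pat i = pat j"
  proof (cases "i0 < j0")
    case True then show ?thesis using that ij0 by blast
  next
    case False then have "j0 < i0" using ij0(1) by simp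
    then show ?thesis using that ij0 by metis
  qed
  define n0 where "n0 = 2 * int i"
  define p where "p = 2 * (int j - int i)"
  have p2: "p \<ge> 2" unfolding p_def using ij(1) by simp
  have ppos: "p > 0" using p2 by simp
  have window: "c0 (gp p ` x) = c0 x" if x: "x \<in> E" and xl: "\<forall>y\<in>x. n0 \<le> lev y \<and> lev y \<le> n0 + 4" for x
  proof -
    define e where "e = gp (- n0) ` x"
    have eE: "e \<in> E" unfolding e_def using gpE[OF x] .
    have eW: "e \<in> W"
    proof -
      have "\<forall>y\<in>e. 0 \<le> lev y \<and> lev y \<le> 4"
      proof
        fix y assume "y \<in> e"
        then obtain z where z: "z \<in> x" "y = gp (- n0) z" unfolding e_def by blast
        have "lev y = lev z - n0" using shift z eV[OF x] by auto
        then show "0 \<le> lev y \<and> lev y \<le> 4" using xl z(1) by fastforce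
      qed
      then show ?thesis unfolding W_def using eE by blast
    qed
    have xe: "gp n0 ` e = x" unfolding e_def using gpimg[OF eV[OF x]] gpimg0[OF eV[OF x]] by simp
    have "gp p ` x = gp p ` (gp n0 ` e)" using xe by simp
    also have "\<dots> = gp (p + n0) ` e" using gpimg[OF eV[OF eE]] by simp
    also have "p + n0 = 2 * int j" unfolding p_def n0_def by simp
    finally have xj: "gp p ` x = gp (2 * int j) ` e" .
    have "pat i e = pat j e" using ij(2) by simp
    then have "c0 (gp (2 * int i) ` e) = c0 (gp (2 * int j) ` e)" unfolding pat_def using eW by simp
    then show ?thesis using xe xj unfolding n0_def by simp
  qed
  define b where "b = n0 + 2"
  define t where "t e = (mlev e - b) div p" for e
  define c where "c e = c0 (gp (- (t e * p)) ` e)" for e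
  have tb: "b \<le> mlev e - t e * p \<and> mlev e - t e * p < b + p" for e
  proof -
    have "mlev e - b = p * t e + (mlev e - b) mod p" unfolding t_def by simp
    moreover have "0 \<le> (mlev e - b) mod p" "(mlev e - b) mod p < p" using ppos by simp_all
    ultimately show ?thesis by (simp add: algebra_simps)
  qed
  have tval: "t e = k" if "mlev e - b = p * k + r" "0 \<le> r" "r < p" for e k r
    unfolding t_def using int_div_pos_eq[OF that] .
  have cshift: "c (gp (k * p) ` e) = c e" if e: "e \<in> E" for e k
  proof -
    have tt: "t (gp (k * p) ` e) = t e + k"
    proof (rule tval)
      show "mlev (gp (k * p) ` e) - b = p * (t e + k) + (mlev e - b - t e * p)"
        using m1[OF e] by (simp add: algebra_simps)
      show "0 \<le> mlev e - b - t e * p" using tb[of e] by simp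
      show "mlev e - b - t e * p < p" using tb[of e] by simp
    qed
    have "gp (- (t (gp (k * p) ` e) * p)) ` (gp (k * p) ` e) = gp (- ((t e + k) * p) + k * p) ` e"
      using tt gpimg[OF eV[OF e]] by simp
    also have "- ((t e + k) * p) + k * p = - (t e * p)" by (simp add: algebra_simps)
    finally show ?thesis unfolding c_def by simp
  qed
  have colors: "c ` E \<subseteq> {..<\<chi>}" unfolding c_def using c0(2) gpE by blast
  have proper: "proper_edge_coloring V adj c"
    unfolding proper_edge_coloring_def E_def[symmetric]
  proof (intro ballI impI)
    fix e e' assume e: "e \<in> E" and e': "e' \<in> E" and ne: "e \<noteq> e' \<and> e \<inter> e' \<noteq> {}"
    define T where "T = t e * p"
    define e1 where "e1 = gp (- T) ` e"
    define e1' where "e1' = gp (- T) ` e'"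
    have e1E: "e1 \<in> E" and e1'E: "e1' \<in> E" unfolding e1_def e1'_def using gpE e e' by blast+
    have ne1: "e1 \<noteq> e1'" unfolding e1_def e1'_def using gpinjE eV[OF e] eV[OF e'] ne by blast
    have int1: "e1 \<inter> e1' \<noteq> {}" unfolding e1_def e1'_def using ne by blast
    have cdiff: "c0 e1 \<noteq> c0 e1'" using c0p[OF e1E e1'E ne1 int1] .
    have ce: "c e = c0 e1" unfolding c_def e1_def T_def ..
    have me1: "mlev e1 = mlev e - T" unfolding e1_def using m1[OF e] by simp
    have me1': "mlev e1' = mlev e' - T" unfolding e1'_def using m1[OF e'] by simp
    have rng: "b \<le> mlev e1 \<and> mlev e1 < b + p" using tb[of e] me1 unfolding T_def by simp
    have cls1: "mlev e1' \<le> mlev e1 + 1 \<and> mlev e1 \<le> mlev e1' + 1" using m3[OF e1E e1'E int1] .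
    have bck: "gp T ` e1' = e'" unfolding e1'_def using gpimg[OF eV[OF e']] gpimg0[OF eV[OF e']] by simp
    have "c e' = c0 e1'"
    proof -
      consider "b \<le> mlev e1' \<and> mlev e1' < b + p" | "mlev e1' = b - 1" | "mlev e1' = b + p"
        using rng cls1 p2 by linarith
      then show ?thesis
      proof cases
        case 1
        have "t e' = t e" using tval[of e' "t e" "mlev e1' - b"] 1 me1' ppos unfolding T_def by (simp add: algebra_simps)
        then show ?thesis unfolding c_def e1'_def T_def by simp
      next
        case 2
        have "t e' = t e - 1" using tval[of e' "t e - 1" "p - 1"] 2 me1' ppos unfolding T_def by (simp add: algebra_simps)
        then have "c e' = c0 (gp (- ((t e - 1) * p)) ` e')" unfolding c_def by simp
        also have "gp (- ((t e - 1) * p)) ` e' = gp p ` e1'"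
          unfolding e1'_def T_def using gpimg[OF eV[OF e']] by (simp add: algebra_simps)
        also have "c0 (gp p ` e1') = c0 e1'"
        proof (rule window[OF e1'E])
          show "\<forall>y\<in>e1'. n0 \<le> lev y \<and> lev y \<le> n0 + 4" using m2[OF e1'E] 2 unfolding b_def by fastforce
        qed
        finally show ?thesis .
      next
        case 3
        have "t e' = t e + 1" using tval[of e' "t e + 1" 0] 3 me1' ppos unfolding T_def by (simp add: algebra_simps)
        then have "c e' = c0 (gp (- ((t e + 1) * p)) ` e')" unfolding c_def by simp
        also have "gp (- ((t e + 1) * p)) ` e' = gp (- p) ` e1'"
          unfolding e1'_def T_def using gpimg[OF eV[OF e']] by (simp add: algebra_simps)
        also have "c0 (gp (- p) ` e1') = c0 e1'"
        proof -
          have xE: "gp (- p) ` e1' \<in> E" using gpE[OF e1'E] .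
          have "mlev (gp (- p) ` e1') = b" using m1[OF e1'E] 3 by simp
          then have "\<forall>y\<in>gp (- p) ` e1'. n0 \<le> lev y \<and> lev y \<le> n0 + 4" using m2[OF xE] unfolding b_def by fastforce
          then have "c0 (gp p ` (gp (- p) ` e1')) = c0 (gp (- p) ` e1')" using window[OF xE] by blast
          moreover have "gp p ` (gp (- p) ` e1') = e1'" using gpimg[OF eV[OF e1'E]] gpimg0[OF eV[OF e1'E]] by simp
          ultimately show ?thesis by simp
        qed
        finally show ?thesis .
      qed
    qed
    then show "c e \<noteq> c e'" using ce cdiff by simp
  qed
  define F where "F = {f. automorphism V adj f \<and> (\<forall>e\<in>edges V adj. c (f ` e) = c e)}"
  have gpF: "gp (k * p) \<in> F" for k unfolding F_def E_def[symmetric] using gpa cshift by blast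
  have Fcomp: "f \<circ> f' \<in> F" if "f \<in> F" "f' \<in> F" for f f'
  proof -
    have af: "automorphism V adj f" "automorphism V adj f'" using that unfolding F_def by auto
    have "c ((f \<circ> f') ` e) = c e" if e: "e \<in> E" for e
    proof -
      have "f' ` e \<in> E" using aut_edge[OF af(2)] e unfolding E_def by blast
      then have "c (f ` (f' ` e)) = c (f' ` e)" using \<open>f \<in> F\<close> unfolding F_def E_def by blast
      also have "\<dots> = c e" using \<open>f' \<in> F\<close> e unfolding F_def E_def by blast
      finally show ?thesis by (simp add: image_comp)
    qed
    then show ?thesis using aut_comp[OF af] unfolding F_def E_def by blast
  qed
  define orb where "orb v = {f v | f. f \<in> F}" for v
  define R where "R = {v\<in>V. 0 \<le> lev v \<and> lev v \<le> p - 1}"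
  have Rf: "finite R" unfolding R_def using band by blast
  have orbR: "orb v \<in> orb ` R" if v: "v \<in> V" for v
  proof -
    define k where "k = lev v div p"
    define r where "r = gp (- (k * p)) v"
    have rV: "r \<in> V" unfolding r_def using gpV v by blast
    have "lev r = lev v - k * p" unfolding r_def using shift v by simp
    moreover have "lev v = p * k + lev v mod p" unfolding k_def by simp
    moreover have "0 \<le> lev v mod p" "lev v mod p < p" using ppos by simp_all
    ultimately have "r \<in> R" unfolding R_def using rV by (simp add: algebra_simps)
    have vr: "gp (k * p) r = v" unfolding r_def using gpadd v gp0 by (metis add.right_inverse)
    have "orb v = orb r"
    proof
      show "orb v \<subseteq> orb r"
      proof
        fix y assume "y \<in> orb v"
        then obtain f where f: "f \<in> F" "y = f v" unfolding orb_def by blast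
        have "f \<circ> gp (k * p) \<in> F" using Fcomp[OF f(1) gpF] .
        moreover have "y = (f \<circ> gp (k * p)) r" using f(2) vr by simp
        ultimately show "y \<in> orb r" unfolding orb_def by blast
      qed
      show "orb r \<subseteq> orb v"
      proof
        fix y assume "y \<in> orb r"
        then obtain f where f: "f \<in> F" "y = f r" unfolding orb_def by blast
        have "gp (- k * p) \<in> F" using gpF by blast
        then have "f \<circ> gp (- k * p) \<in> F" using Fcomp[OF f(1)] by blast
        moreover have "y = (f \<circ> gp (- k * p)) v" using f(2) unfolding r_def by simp
        ultimately show "y \<in> orb v" unfolding orb_def by blast
      qed
    qed
    then show ?thesis using \<open>r \<in> R\<close> by blast
  qed
  have "orbits V F = orb ` V" unfolding orbits_def orb_def by blast
  also have "\<dots> \<subseteq> orb ` R" using orbR by blast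
  finally have "finite (orbits V F)" using Rf finite_subset by blast
  then have "periodic_coloring V adj c" unfolding periodic_coloring_def F_def .
  then show ?thesis using proper colors unfolding E_def \<chi>_def by blast
qed

end

theorem corollary5p5:
  fixes V :: "'a set" and adj :: "'a \<Rightarrow> 'a \<Rightarrow> bool"
  assumes "graph V adj"
    and "connected_graph V adj"
    and "locally_finite V adj"
    and "quasi_transitive V adj"
    and "card (ends V adj) = 2"
  shows "\<exists>c. proper_edge_coloring V adj c \<and> periodic_coloring V adj c \<and>
             c ` edges V adj \<subseteq> {..<chromatic_index V adj}"
proof -
  interpret G V adj using assms(1-3) by unfold_locales
  obtain g A S where H: "automorphism V adj g \<and> A \<subseteq> V \<and> finite S \<and> S \<subseteq> V \<and> S \<noteq> {} \<and> A \<inter> S = {} \<and>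
    (\<forall>u\<in>A. \<forall>v. adj u v \<longrightarrow> v \<in> A \<union> S) \<and> g ` A \<subseteq> A \<and> g ` S \<subseteq> A \<and> finite (A - g ` A)"
    using exists_translation[OF assms(4,5)] by (elim exE) (erule that)
  have h: "automorphism V adj g" "A \<subseteq> V" "finite S" "S \<subseteq> V" "S \<noteq> {}" "A \<inter> S = {}"
    "\<forall>u\<in>A. \<forall>v. adj u v \<longrightarrow> v \<in> A \<union> S" "g ` A \<subseteq> A" "g ` S \<subseteq> A" "finite (A - g ` A)"
    using H by blast+
  obtain gp :: "int \<Rightarrow> 'a \<Rightarrow> 'a" and lev :: "'a \<Rightarrow> int" where L: "(\<forall>n. automorphism V adj (gp n)) \<and> (\<forall>m n x. x \<in> V \<longrightarrow> gp (m+n) x = gp m (gp n x))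
    \<and> (\<forall>x\<in>V. gp 0 x = x) \<and> (\<forall>k x. x \<in> V \<longrightarrow> lev (gp k x) = lev x + k)
    \<and> (\<forall>a b. finite {v\<in>V. a \<le> lev v \<and> lev v \<le> b}) \<and> (\<forall>u v. adj u v \<longrightarrow> lev v \<le> lev u + 1)"
    using levels[OF h] by (elim exE) (erule that)
  have l: "\<forall>n. automorphism V adj (gp n)" "\<forall>m n x. x \<in> V \<longrightarrow> gp (m+n) x = gp m (gp n x)"
    "\<forall>x\<in>V. gp 0 x = x" "\<forall>k x. x \<in> V \<longrightarrow> lev (gp k x) = lev x + k"
    "\<forall>a b. finite {v\<in>V. a \<le> lev v \<and> lev v \<le> b}" "\<forall>u v. adj u v \<longrightarrow> lev v \<le> lev u + 1"
    using L by blast+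
  show ?thesis using coloring[OF l] .
qed

end
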